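(* Let $\Lambda=K\mathcal{Q}/I$ be a finite-dimensional algebra over a field $K$ as in the context, let $A\geqslant1$, let $\tilde{\Lambda}=\tilde{\Lambda}_A$ be its stretched algebra, $\varepsilon=\sum_{v\in\mathcal{Q}_0}v\in\tilde{\Lambda}$ and $B=\varepsilon\tilde{\Lambda}\varepsilon$. Then: (1) $\tilde{\Lambda}\varepsilon$ is projective as a right $B$-module; (2) $\varepsilon\tilde{\Lambda}$ is projective as a left $B$-module.
   Context: Conventions: $\mathcal{Q}$ is a finite quiver with vertex set $\mathcal{Q}_0$; $\mathfrak{o}(\alpha)$, $\mathfrak{t}(\alpha)$ denote start and end of an arrow; paths are written left to right. An element $x\in K\mathcal{Q}$ is uniform if $x=vx=xv'$ for vertices $v,v'$. $\Lambda=K\mathcal{Q}/I$ is finite-dimensional with $I$ an admissible ideal generated by a minimal set $\{g^2_1,\dots,g^2_m\}$ of uniform elements. Stretched algebra: for $A\geqslant1$, the quiver $\tilde{\mathcal{Q}}_A$ has all vertices of $\mathcal{Q}$ plus, for each arrow $\alpha$ of $\mathcal{Q}$, new vertices $w_1,\dots,w_{A-1}$; each arrow $\alpha$ is replaced by arrows $\alpha_1,\dots,\alpha_A$ with $\mathfrak{o}(\alpha_1)=\mathfrak{o}(\alpha)$, $\mathfrak{t}(\alpha_j)=\mathfrak{o}(\alpha_{j+1})=w_j$ ($1\le j\le A-1$), $\mathfrak{t}(\alpha_A)=\mathfrak{t}(\alpha)$, and the only arrows incident with $w_j$ are $\alpha_j,\alpha_{j+1}$. $\theta^*:K\mathcal{Q}\to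 K\tilde{\mathcal{Q}}_A$ is the algebra homomorphism fixing vertices and sending $\alpha\mapsto\alpha_1\cdots\alpha_A$; $\tilde{I}_A$ is the ideal generated by $\theta^*(g^2_1),\dots,\theta^*(g^2_m)$; $\tilde{\Lambda}_A=K\tilde{\mathcal{Q}}_A/\tilde{I}_A$. *)

theory Defs
  imports "HOL-Algebra.QuotRing" "HOL-Algebra.Module"
begin

record ('v, 'a) quiver =
  verts :: "'v set"
  arrs  :: "'a set"
  src   :: "'a \<Rightarrow> 'v"
  tgt   :: "'a \<Rightarrow> 'v"

text \<open>A path is a start vertex together with a list of arrows (written left to right);
  the trivial path at v is (v, []).\<close>
type_synonym ('v, 'a) qpath = "'v \<times> 'a list"

fun composable :: "('v, 'a) quiver \<Rightarrow> 'v \<Rightarrow> 'a list \<Rightarrow> bool" where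
  "composable Q v [] = True"
| "composable Q v (a # as) = (src Q a = v \<and> composable Q (tgt Q a) as)"

definition qpaths :: "('v, 'a) quiver \<Rightarrow> ('v, 'a) qpath set" where
  "qpaths Q = {(v, xs). v \<in> verts Q \<and> set xs \<subseteq> arrs Q \<and> composable Q v xs}"

definition ptgt :: "('v, 'a) quiver \<Rightarrow> ('v, 'a) qpath \<Rightarrow> 'v" where
  "ptgt Q p = (if snd p = [] then fst p else tgt Q (last (snd p)))"

text \<open>The path algebra KQ: finitely supported K-valued functions on paths;
  the product of two paths is their concatenation if composable and 0 otherwise.\<close>
definition path_algebra :: "('v, 'a) quiver \<Rightarrow> (('v, 'a) qpath \<Rightarrow> 'k::field) ring" where
  "path_algebra Q =
    \<lparr>carrier = {f. finite {p. f p \<noteq> 0} \<and> {p. f p \<noteq> 0} \<subseteq> qpaths Q},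
     mult = (\<lambda>f g p. \<Sum>k\<in>{0..length (snd p)}.
                f (fst p, take k (snd p)) * g (ptgt Q (fst p, take k (snd p)), drop k (snd p))),
     one = (\<lambda>p. if snd p = [] \<and> fst p \<in> verts Q then 1 else 0),
     zero = (\<lambda>p. 0),
     add = (\<lambda>f g p. f p + g p)\<rparr>"

definition pel :: "('v, 'a) qpath \<Rightarrow> (('v, 'a) qpath \<Rightarrow> 'k::field)" where
  "pel q = (\<lambda>p. if p = q then 1 else 0)"

definition vtx :: "'v \<Rightarrow> (('v, 'a) qpath \<Rightarrow> 'k::field)" where
  "vtx v = pel (v, [])"

definition uniform :: "('v, 'a) quiver \<Rightarrow> (('v, 'a) qpath \<Rightarrow> 'k::field) \<Rightarrow> bool" where
  "uniform Q x \<longleftrightarrow> (\<exists>v\<in>verts Q. \<exists>v'\<in>verts Q.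
      x = vtx v \<otimes>\<^bsub>path_algebra Q\<^esub> x \<and> x = x \<otimes>\<^bsub>path_algebra Q\<^esub> vtx v')"

definition arrow_ideal_pow :: "('v, 'a) quiver \<Rightarrow> nat \<Rightarrow> (('v, 'a) qpath \<Rightarrow> 'k::field) set" where
  "arrow_ideal_pow Q m =
     genideal (path_algebra Q) {pel p | p. p \<in> qpaths Q \<and> length (snd p) = m}"

definition admissible :: "('v, 'a) quiver \<Rightarrow> (('v, 'a) qpath \<Rightarrow> 'k::field) set \<Rightarrow> bool" where
  "admissible Q I \<longleftrightarrow> ideal I (path_algebra Q) \<and>
     (\<exists>m\<ge>2. arrow_ideal_pow Q m \<subseteq> I) \<and> I \<subseteq> arrow_ideal_pow Q 2"

definition minimal_generating_set ::
  "('v, 'a) quiver \<Rightarrow> (('v, 'a) qpath \<Rightarrow> 'k::field) set \<Rightarrow> (('v, 'a) qpath \<Rightarrow> 'k) set \<Rightarrow> bool" where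
  "minimal_generating_set Q G I \<longleftrightarrow> finite G \<and> G \<subseteq> carrier (path_algebra Q) \<and>
     genideal (path_algebra Q) G = I \<and>
     (\<forall>H. H \<subset> G \<longrightarrow> genideal (path_algebra Q) H \<noteq> I)"

text \<open>New vertices w_j of arrow alpha are Inr (alpha, j), 1 <= j <= A-1;
  the arrows alpha_1 .. alpha_A are (alpha, 1) .. (alpha, A).\<close>
definition stretch_quiver :: "nat \<Rightarrow> ('v, 'a) quiver \<Rightarrow> ('v + 'a \<times> nat, 'a \<times> nat) quiver" where
  "stretch_quiver A Q =
    \<lparr>verts = Inl ` verts Q \<union> {Inr (\<alpha>, j) | \<alpha> j. \<alpha> \<in> arrs Q \<and> 1 \<le> j \<and> j \<le> A - 1},
     arrs = {(\<alpha>, j) | \<alpha> j. \<alpha> \<in> arrs Q \<and> 1 \<le> j \<and> j \<le> A},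
     src = (\<lambda>(\<alpha>, j). if j = 1 then Inl (src Q \<alpha>) else Inr (\<alpha>, j - 1)),
     tgt = (\<lambda>(\<alpha>, j). if j = A then Inl (tgt Q \<alpha>) else Inr (\<alpha>, j))\<rparr>"

definition stretch_path :: "nat \<Rightarrow> ('v, 'a) qpath \<Rightarrow> ('v + 'a \<times> nat, 'a \<times> nat) qpath" where
  "stretch_path A p = (Inl (fst p), concat (map (\<lambda>\<alpha>. map (\<lambda>j. (\<alpha>, j)) [1..<A+1]) (snd p)))"

text \<open>theta*: the linear (algebra) map fixing vertices and sending each arrow alpha to
  alpha_1 ... alpha_A, i.e. sending each path to its stretched path.\<close>
definition theta :: "nat \<Rightarrow> (('v, 'a) qpath \<Rightarrow> 'k::field) \<Rightarrow> (('v + 'a \<times> nat, 'a \<times> nat) qpath \<Rightarrow> 'k)" where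
  "theta A f = (\<lambda>q. \<Sum>p\<in>{p. f p \<noteq> 0 \<and> stretch_path A p = q}. f p)"

definition stretched_ideal ::
  "nat \<Rightarrow> ('v, 'a) quiver \<Rightarrow> (('v, 'a) qpath \<Rightarrow> 'k::field) set \<Rightarrow> (('v + 'a \<times> nat, 'a \<times> nat) qpath \<Rightarrow> 'k) set" where
  "stretched_ideal A Q G = genideal (path_algebra (stretch_quiver A Q)) (theta A ` G)"

definition stretched_algebra ::
  "nat \<Rightarrow> ('v, 'a) quiver \<Rightarrow> (('v, 'a) qpath \<Rightarrow> 'k::field) set \<Rightarrow> (('v + 'a \<times> nat, 'a \<times> nat) qpath \<Rightarrow> 'k) set ring" where
  "stretched_algebra A Q G = path_algebra (stretch_quiver A Q) Quot stretched_ideal A Q G"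

definition stretched_eps ::
  "nat \<Rightarrow> ('v, 'a) quiver \<Rightarrow> (('v, 'a) qpath \<Rightarrow> 'k::field) set \<Rightarrow> (('v + 'a \<times> nat, 'a \<times> nat) qpath \<Rightarrow> 'k) set" where
  "stretched_eps A Q G =
     stretched_ideal A Q G +>\<^bsub>path_algebra (stretch_quiver A Q)\<^esub>
       (\<Oplus>\<^bsub>path_algebra (stretch_quiver A Q)\<^esub> v\<in>verts Q. vtx (Inl v))"

definition corner_ring :: "('r, 'c) ring_scheme \<Rightarrow> 'r \<Rightarrow> 'r ring" where
  "corner_ring R e =
    \<lparr>carrier = {e \<otimes>\<^bsub>R\<^esub> x \<otimes>\<^bsub>R\<^esub> e | x. x \<in> carrier R},
     mult = mult R, one = e, zero = \<zero>\<^bsub>R\<^esub>, add = add R\<rparr>"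

text \<open>Modules over a (not necessarily commutative) ring, using the module record of
  HOL-Algebra (only carrier, add, zero and smult are relevant). For a right module,
  smult r m stands for m r.\<close>
definition left_module :: "('r, 'c) ring_scheme \<Rightarrow> ('r, 'm) module \<Rightarrow> bool" where
  "left_module R M \<longleftrightarrow> ring R \<and> abelian_group M \<and>
    (\<forall>a\<in>carrier R. \<forall>x\<in>carrier M. a \<odot>\<^bsub>M\<^esub> x \<in> carrier M) \<and>
    (\<forall>a\<in>carrier R. \<forall>b\<in>carrier R. \<forall>x\<in>carrier M. (a \<oplus>\<^bsub>R\<^esub> b) \<odot>\<^bsub>M\<^esub> x = a \<odot>\<^bsub>M\<^esub> x \<oplus>\<^bsub>M\<^esub> b \<odot>\<^bsub>M\<^esub> x) \<and>
    (\<forall>a\<in>carrier R. \<forall>x\<in>carrier M. \<forall>y\<in>carrier M. a \<odot>\<^bsub>M\<^esub> (x \<oplus>\<^bsub>M\<^esub> y) = a \<odot>\<^bsub>M\<^esub> x \<oplus>\<^bsub>M\<^esub> a \<odot>\<^bsub>M\<^esub> y) \<and>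
    (\<forall>a\<in>carrier R. \<forall>b\<in>carrier R. \<forall>x\<in>carrier M. (a \<otimes>\<^bsub>R\<^esub> b) \<odot>\<^bsub>M\<^esub> x = a \<odot>\<^bsub>M\<^esub> (b \<odot>\<^bsub>M\<^esub> x)) \<and>
    (\<forall>x\<in>carrier M. \<one>\<^bsub>R\<^esub> \<odot>\<^bsub>M\<^esub> x = x)"

definition right_module :: "('r, 'c) ring_scheme \<Rightarrow> ('r, 'm) module \<Rightarrow> bool" where
  "right_module R M \<longleftrightarrow> ring R \<and> abelian_group M \<and>
    (\<forall>a\<in>carrier R. \<forall>x\<in>carrier M. a \<odot>\<^bsub>M\<^esub> x \<in> carrier M) \<and>
    (\<forall>a\<in>carrier R. \<forall>b\<in>carrier R. \<forall>x\<in>carrier M. (a \<oplus>\<^bsub>R\<^esub> b) \<odot>\<^bsub>M\<^esub> x = a \<odot>\<^bsub>M\<^esub> x \<oplus>\<^bsub>M\<^esub> b \<odot>\<^bsub>M\<^esub> x) \<and>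
    (\<forall>a\<in>carrier R. \<forall>x\<in>carrier M. \<forall>y\<in>carrier M. a \<odot>\<^bsub>M\<^esub> (x \<oplus>\<^bsub>M\<^esub> y) = a \<odot>\<^bsub>M\<^esub> x \<oplus>\<^bsub>M\<^esub> a \<odot>\<^bsub>M\<^esub> y) \<and>
    (\<forall>a\<in>carrier R. \<forall>b\<in>carrier R. \<forall>x\<in>carrier M. (a \<otimes>\<^bsub>R\<^esub> b) \<odot>\<^bsub>M\<^esub> x = b \<odot>\<^bsub>M\<^esub> (a \<odot>\<^bsub>M\<^esub> x)) \<and>
    (\<forall>x\<in>carrier M. \<one>\<^bsub>R\<^esub> \<odot>\<^bsub>M\<^esub> x = x)"

definition mod_hom :: "('r, 'c) ring_scheme \<Rightarrow> ('r, 'm) module \<Rightarrow> ('r, 'n) module \<Rightarrow> ('m \<Rightarrow> 'n) set" where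
  "mod_hom R M N = {h. h \<in> carrier M \<rightarrow> carrier N \<and>
     (\<forall>x\<in>carrier M. \<forall>y\<in>carrier M. h (x \<oplus>\<^bsub>M\<^esub> y) = h x \<oplus>\<^bsub>N\<^esub> h y) \<and>
     (\<forall>a\<in>carrier R. \<forall>x\<in>carrier M. h (a \<odot>\<^bsub>M\<^esub> x) = a \<odot>\<^bsub>N\<^esub> h x)}"

text \<open>The test modules M, N range over modules whose
  carriers live in the arbitrary types 'm and 'n; stating the theorem for all such types
  (free type variables) gives projectivity in the usual sense.\<close>
definition left_projective ::
  "('r, 'c) ring_scheme \<Rightarrow> ('r, 'p) module \<Rightarrow> 'm itself \<Rightarrow> 'n itself \<Rightarrow> bool" where
  "left_projective R P (_ :: 'm itself) (_ :: 'n itself) \<longleftrightarrow> left_module R P \<and>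
    (\<forall>(M :: ('r, 'm) module) (N :: ('r, 'n) module) g f.
       left_module R M \<and> left_module R N \<and> g \<in> mod_hom R M N \<and> g ` carrier M = carrier N \<and>
       f \<in> mod_hom R P N \<longrightarrow> (\<exists>h\<in>mod_hom R P M. \<forall>x\<in>carrier P. g (h x) = f x))"

definition right_projective ::
  "('r, 'c) ring_scheme \<Rightarrow> ('r, 'p) module \<Rightarrow> 'm itself \<Rightarrow> 'n itself \<Rightarrow> bool" where
  "right_projective R P (_ :: 'm itself) (_ :: 'n itself) \<longleftrightarrow> right_module R P \<and>
    (\<forall>(M :: ('r, 'm) module) (N :: ('r, 'n) module) g f.
       right_module R M \<and> right_module R N \<and> g \<in> mod_hom R M N \<and> g ` carrier M = carrier N \<and>
       f \<in> mod_hom R P N \<longrightarrow> (\<exists>h\<in>mod_hom R P M. \<forall>x\<in>carrier P. g (h x) = f x))"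

definition right_corner_module :: "('r, 'c) ring_scheme \<Rightarrow> 'r \<Rightarrow> ('r, 'r) module" where
  "right_corner_module R e =
    \<lparr>carrier = {x \<otimes>\<^bsub>R\<^esub> e | x. x \<in> carrier R}, mult = mult R, one = \<one>\<^bsub>R\<^esub>,
     zero = \<zero>\<^bsub>R\<^esub>, add = add R, smult = (\<lambda>b x. x \<otimes>\<^bsub>R\<^esub> b)\<rparr>"

definition left_corner_module :: "('r, 'c) ring_scheme \<Rightarrow> 'r \<Rightarrow> ('r, 'r) module" where
  "left_corner_module R e =
    \<lparr>carrier = {e \<otimes>\<^bsub>R\<^esub> x | x. x \<in> carrier R}, mult = mult R, one = \<one>\<^bsub>R\<^esub>,
     zero = \<zero>\<^bsub>R\<^esub>, add = add R, smult = (\<lambda>b x. b \<otimes>\<^bsub>R\<^esub> x)\<rparr>"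

end

theory Submission
  imports Defs
begin

lemma pa_simps:
  "carrier (path_algebra Q) = {f. finite {p. f p \<noteq> 0} \<and> {p. f p \<noteq> 0} \<subseteq> qpaths Q}"
  "one (path_algebra Q) = (\<lambda>p. if snd p = [] \<and> fst p \<in> verts Q then 1 else 0)"
  "zero (path_algebra Q) = (\<lambda>p. 0)"
  "add (path_algebra Q) = (\<lambda>f g p. f p + g p)"
  by (simp_all add: path_algebra_def)

lemma pa_mult:
  "(f \<otimes>\<^bsub>path_algebra Q\<^esub> g) (v, xs) =
     (\<Sum>k\<in>{0..length xs}. f (v, take k xs) * g (ptgt Q (v, take k xs), drop k xs))"
  by (simp add: path_algebra_def)

lemma ptgt_Nil[simp]: "ptgt Q (v, []) = v"
  by (simp add: ptgt_def)

lemma ptgt_Cons[simp]: "ptgt Q (v, a # xs) = ptgt Q (tgt Q a, xs)"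
  by (simp add: ptgt_def)

lemma ptgt_append: "ptgt Q (v, xs @ ys) = ptgt Q (ptgt Q (v, xs), ys)"
  by (induction xs arbitrary: v) auto

lemma composable_append:
  "composable Q v (xs @ ys) \<longleftrightarrow> composable Q v xs \<and> composable Q (ptgt Q (v, xs)) ys"
  by (induction xs arbitrary: v) auto

lemma qpaths_iff: "(v, xs) \<in> qpaths Q \<longleftrightarrow> v \<in> verts Q \<and> set xs \<subseteq> arrs Q \<and> composable Q v xs"
  by (simp add: qpaths_def)

lemma ptgt_in_verts:
  assumes "(v, xs) \<in> qpaths Q" "\<forall>a\<in>arrs Q. tgt Q a \<in> verts Q"
  shows "ptgt Q (v, xs) \<in> verts Q"
  using assms by (cases xs rule: rev_cases) (auto simp: qpaths_iff ptgt_def)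

lemma qpaths_split:
  assumes "\<forall>a\<in>arrs Q. tgt Q a \<in> verts Q"
  shows "(v, xs @ ys) \<in> qpaths Q \<longleftrightarrow> (v, xs) \<in> qpaths Q \<and> (ptgt Q (v, xs), ys) \<in> qpaths Q"
  using assms ptgt_in_verts[of v xs Q] by (auto simp: qpaths_iff composable_append)

lemma qpaths_take_drop:
  assumes "\<forall>a\<in>arrs Q. tgt Q a \<in> verts Q"
  shows "(v, xs) \<in> qpaths Q \<longleftrightarrow> (v, take k xs) \<in> qpaths Q \<and> (ptgt Q (v, take k xs), drop k xs) \<in> qpaths Q"
  using qpaths_split[OF assms, of v "take k xs" "drop k xs"] by simp

lemma sum_single:
  assumes "finite A" "k0 \<in> A" "\<And>k. k \<in> A \<Longrightarrow> k \<noteq> k0 \<Longrightarrow> F k = 0"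
  shows "sum F A = F k0"
proof -
  have "sum F A = F k0 + sum F (A - {k0})" using assms by (simp add: sum.remove)
  also have "sum F (A - {k0}) = 0" using assms by (intro sum.neutral) auto
  finally show ?thesis by simp
qed

definition vset :: "'v set \<Rightarrow> ('v, 'a) qpath \<Rightarrow> 'k::field" where
  "vset E = (\<lambda>p. if snd p = [] \<and> fst p \<in> E then 1 else 0)"

lemma pa_one_vset: "one (path_algebra Q) = vset (verts Q)"
  by (simp add: pa_simps vset_def)

lemma vset_mult:
  "(vset E \<otimes>\<^bsub>path_algebra Q\<^esub> f) p = (if fst p \<in> E then f p else (0::'k::field))"
proof -
  obtain v xs where p: "p = (v, xs)" by (cases p)
  have "(vset E \<otimes>\<^bsub>path_algebra Q\<^esub> f) (v, xs)
      = (\<Sum>k\<in>{0..length xs}. vset E (v, take k xs) * f (ptgt Q (v, take k xs), drop k xs))"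
    by (rule pa_mult)
  also have "\<dots> = vset E (v, take 0 xs) * f (ptgt Q (v, take 0 xs), drop 0 xs)"
    by (rule sum_single) (auto simp: vset_def)
  finally show ?thesis by (simp add: p vset_def)
qed

lemma mult_vset:
  "(f \<otimes>\<^bsub>path_algebra Q\<^esub> vset E) p = (if ptgt Q p \<in> E then f p else (0::'k::field))"
proof -
  obtain v xs where p: "p = (v, xs)" by (cases p)
  have "(f \<otimes>\<^bsub>path_algebra Q\<^esub> vset E) (v, xs)
      = (\<Sum>k\<in>{0..length xs}. f (v, take k xs) * vset E (ptgt Q (v, take k xs), drop k xs))"
    by (rule pa_mult)
  also have "\<dots> = f (v, take (length xs) xs) * vset E (ptgt Q (v, take (length xs) xs), drop (length xs) xs)"
    by (rule sum_single) (auto simp: vset_def)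
  finally show ?thesis by (simp add: p vset_def)
qed

lemma supp_mult:
  assumes "(f \<otimes>\<^bsub>path_algebra Q\<^esub> g) (v, xs) \<noteq> 0"
  shows "\<exists>k\<le>length xs. f (v, take k xs) \<noteq> 0 \<and> g (ptgt Q (v, take k xs), drop k xs) \<noteq> (0::'k::field)"
proof -
  from assms have "(\<Sum>k\<in>{0..length xs}. f (v, take k xs) * g (ptgt Q (v, take k xs), drop k xs)) \<noteq> 0"
    by (simp add: pa_mult)
  then obtain k where "k \<in> {0..length xs}" "f (v, take k xs) * g (ptgt Q (v, take k xs), drop k xs) \<noteq> 0"
    by (meson sum.not_neutral_contains_not_neutral)
  then show ?thesis by auto
qed

lemma pa_mult_assoc:
  fixes f g h :: "('v, 'a) qpath \<Rightarrow> 'k::field"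
  shows "((f \<otimes>\<^bsub>path_algebra Q\<^esub> g) \<otimes>\<^bsub>path_algebra Q\<^esub> h) =
   (f \<otimes>\<^bsub>path_algebra Q\<^esub> (g \<otimes>\<^bsub>path_algebra Q\<^esub> h))"
proof
  fix p :: "('v, 'a) qpath"
  obtain v xs where p: "p = (v, xs)" by (cases p)
  define n where "n = length xs"
  define T where "T = (\<lambda>l k. f (v, take l xs) * g (ptgt Q (v, take l xs), take (k - l) (drop l xs))
       * h (ptgt Q (v, take k xs), drop k xs))"
  have L: "((f \<otimes>\<^bsub>path_algebra Q\<^esub> g) \<otimes>\<^bsub>path_algebra Q\<^esub> h) (v, xs)
        = (\<Sum>k\<in>{0..n}. \<Sum>l\<in>{0..n}. if l \<le> k then T l k else 0)"
  proof -
    have "((f \<otimes>\<^bsub>path_algebra Q\<^esub> g) \<otimes>\<^bsub>path_algebra Q\<^esub> h) (v, xs)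
       = (\<Sum>k\<in>{0..n}. (\<Sum>l\<in>{0..k}. T l k))"
      unfolding pa_mult n_def
    proof (rule sum.cong[OF refl])
      fix k assume k: "k \<in> {0..length xs}"
      have "(\<Sum>l\<in>{0..length (take k xs)}. f (v, take l (take k xs)) *
              g (ptgt Q (v, take l (take k xs)), drop l (take k xs))) * h (ptgt Q (v, take k xs), drop k xs)
           = (\<Sum>l\<in>{0..k}. T l k)"
        unfolding sum_distrib_right T_def using k
        by (intro sum.cong) (auto simp: min_def take_drop)
      then show "(\<Sum>l\<in>{0..length (take k xs)}. f (v, take l (take k xs)) *
              g (ptgt Q (v, take l (take k xs)), drop l (take k xs))) * h (ptgt Q (v, take k xs), drop k xs)
           = (\<Sum>l\<in>{0..k}. T l k)" .
    qed
    also have "\<dots> = (\<Sum>k\<in>{0..n}. \<Sum>l\<in>{0..n}. if l \<le> k then T l k else 0)"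
    proof (rule sum.cong[OF refl])
      fix k assume "k \<in> {0..n}"
      then have "{0..n} \<inter> {..k} = {0..k}" by auto
      then show "(\<Sum>l\<in>{0..k}. T l k) = (\<Sum>l\<in>{0..n}. if l \<le> k then T l k else 0)"
        using sum.inter_restrict[of "{0..n}" "\<lambda>l. T l k" "{..k}"] by simp
    qed
    finally show ?thesis .
  qed
  have R: "(f \<otimes>\<^bsub>path_algebra Q\<^esub> (g \<otimes>\<^bsub>path_algebra Q\<^esub> h)) (v, xs)
        = (\<Sum>l\<in>{0..n}. \<Sum>k\<in>{0..n}. if l \<le> k then T l k else 0)"
  proof -
    have "(f \<otimes>\<^bsub>path_algebra Q\<^esub> (g \<otimes>\<^bsub>path_algebra Q\<^esub> h)) (v, xs)
       = (\<Sum>l\<in>{0..n}. (\<Sum>k\<in>{l..n}. T l k))"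
      unfolding pa_mult n_def
    proof (rule sum.cong[OF refl])
      fix l assume l: "l \<in> {0..length xs}"
      have e1: "{l..length xs} = {0 + l..(length xs - l) + l}" using l by auto
      have "(\<Sum>k\<in>{l..length xs}. T l k) = (\<Sum>m\<in>{0..length xs - l}. T l (m + l))"
        unfolding e1 by (rule sum.shift_bounds_cl_nat_ivl)
      also have "\<dots> = f (v, take l xs) * (\<Sum>m\<in>{0..length xs - l}.
          g (ptgt Q (v, take l xs), take m (drop l xs)) *
          h (ptgt Q (ptgt Q (v, take l xs), take m (drop l xs)), drop m (drop l xs)))"
        unfolding sum_distrib_left T_def
      proof (intro sum.cong refl)
        fix m assume m: "m \<in> {0..length xs - l}"
        have "take (m + l) xs = take l xs @ take m (drop l xs)"
          by (metis add.commute take_add)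
        then have "ptgt Q (v, take (m + l) xs) = ptgt Q (ptgt Q (v, take l xs), take m (drop l xs))"
          by (simp add: ptgt_append)
        then show "f (v, take l xs) * g (ptgt Q (v, take l xs), take (m + l - l) (drop l xs)) *
          h (ptgt Q (v, take (m + l) xs), drop (m + l) xs) =
          f (v, take l xs) * (g (ptgt Q (v, take l xs), take m (drop l xs)) *
          h (ptgt Q (ptgt Q (v, take l xs), take m (drop l xs)), drop m (drop l xs)))"
          by (simp add: add.commute mult.assoc)
      qed
      finally show "f (v, take l xs) * (\<Sum>m\<in>{0..length (drop l xs)}.
          g (ptgt Q (v, take l xs), take m (drop l xs)) *
          h (ptgt Q (ptgt Q (v, take l xs), take m (drop l xs)), drop m (drop l xs)))
          = (\<Sum>k\<in>{l..length xs}. T l k)" by simp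
    qed
    also have "\<dots> = (\<Sum>l\<in>{0..n}. \<Sum>k\<in>{0..n}. if l \<le> k then T l k else 0)"
    proof (rule sum.cong[OF refl])
      fix l assume "l \<in> {0..n}"
      then have "{0..n} \<inter> {l..} = {l..n}" by auto
      then show "(\<Sum>k\<in>{l..n}. T l k) = (\<Sum>k\<in>{0..n}. if l \<le> k then T l k else 0)"
        using sum.inter_restrict[of "{0..n}" "\<lambda>k. T l k" "{l..}"] by simp
    qed
    finally show ?thesis .
  qed
  show "((f \<otimes>\<^bsub>path_algebra Q\<^esub> g) \<otimes>\<^bsub>path_algebra Q\<^esub> h) p = (f \<otimes>\<^bsub>path_algebra Q\<^esub> (g \<otimes>\<^bsub>path_algebra Q\<^esub> h)) p"
    unfolding p L R by (rule sum.swap)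
qed

lemma pa_mult_closed:
  assumes tgtQ: "\<forall>a\<in>arrs Q. tgt Q a \<in> verts Q"
    and f: "f \<in> carrier (path_algebra Q)" and g: "g \<in> carrier (path_algebra Q)"
  shows "(f \<otimes>\<^bsub>path_algebra Q\<^esub> g :: ('v, 'a) qpath \<Rightarrow> 'k::field) \<in> carrier (path_algebra Q)"
proof -
  let ?F = "{p. f p \<noteq> 0}" and ?G = "{p. g p \<noteq> 0}"
  have fin: "finite ?F" "finite ?G" "?F \<subseteq> qpaths Q" "?G \<subseteq> qpaths Q"
    using f g by (auto simp: pa_simps)
  have sub: "{p. (f \<otimes>\<^bsub>path_algebra Q\<^esub> g) p \<noteq> 0} \<subseteq> (\<lambda>(a, b). (fst a, snd a @ snd b)) ` (?F \<times> ?G)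
        \<and> {p. (f \<otimes>\<^bsub>path_algebra Q\<^esub> g) p \<noteq> 0} \<subseteq> qpaths Q"
  proof (intro conjI subsetI)
    fix p assume "p \<in> {p. (f \<otimes>\<^bsub>path_algebra Q\<^esub> g) p \<noteq> 0}"
    moreover obtain v xs where p: "p = (v, xs)" by (cases p)
    ultimately obtain k where k: "f (v, take k xs) \<noteq> 0" "g (ptgt Q (v, take k xs), drop k xs) \<noteq> 0"
      using supp_mult by fastforce
    then show "p \<in> (\<lambda>(a, b). (fst a, snd a @ snd b)) ` (?F \<times> ?G)"
      unfolding p by (intro image_eqI[of _ _ "((v, take k xs), (ptgt Q (v, take k xs), drop k xs))"]) auto
    have "(v, take k xs) \<in> qpaths Q" "(ptgt Q (v, take k xs), drop k xs) \<in> qpaths Q"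
      using k fin by auto
    then show "p \<in> qpaths Q" unfolding p using qpaths_take_drop[OF tgtQ] by blast
  qed
  then show ?thesis using fin by (auto simp: pa_simps intro: finite_subset)
qed

lemma pa_ring:
  assumes finV: "finite (verts Q)" and tgtQ: "\<forall>a\<in>arrs Q. tgt Q a \<in> verts Q"
  shows "ring (path_algebra Q :: (('v, 'a) qpath \<Rightarrow> 'k::field) ring)"
proof (rule ringI)
  show "abelian_group (path_algebra Q :: (('v, 'a) qpath \<Rightarrow> 'k::field) ring)"
  proof (rule abelian_groupI)
    fix x y :: "('v, 'a) qpath \<Rightarrow> 'k"
    assume "x \<in> carrier (path_algebra Q)" "y \<in> carrier (path_algebra Q)"
    then show "x \<oplus>\<^bsub>path_algebra Q\<^esub> y \<in> carrier (path_algebra Q)"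
    proof -
      have "{p. x p + y p \<noteq> 0} \<subseteq> {p. x p \<noteq> 0} \<union> {p. y p \<noteq> 0}" by auto
      then show ?thesis using \<open>x \<in> carrier (path_algebra Q)\<close> \<open>y \<in> carrier (path_algebra Q)\<close>
        by (auto simp: pa_simps intro: finite_subset)
    qed
  next
    show "\<zero>\<^bsub>path_algebra Q\<^esub> \<in> carrier (path_algebra Q :: (('v, 'a) qpath \<Rightarrow> 'k::field) ring)"
      by (simp add: pa_simps)
  next
    fix x :: "('v, 'a) qpath \<Rightarrow> 'k"
    assume x: "x \<in> carrier (path_algebra Q)"
    show "\<exists>y\<in>carrier (path_algebra Q). y \<oplus>\<^bsub>path_algebra Q\<^esub> x = \<zero>\<^bsub>path_algebra Q\<^esub>"
      using x by (intro bexI[of _ "\<lambda>p. - x p"]) (auto simp: pa_simps)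
  qed (auto simp: pa_simps algebra_simps)
next
  show "monoid (path_algebra Q :: (('v, 'a) qpath \<Rightarrow> 'k::field) ring)"
  proof (rule monoidI)
    show "\<one>\<^bsub>path_algebra Q\<^esub> \<in> carrier (path_algebra Q :: (('v, 'a) qpath \<Rightarrow> 'k::field) ring)"
    proof -
      have "{p. (\<one>\<^bsub>path_algebra Q\<^esub> :: ('v, 'a) qpath \<Rightarrow> 'k) p \<noteq> 0} = (\<lambda>v. (v, [])) ` verts Q"
        by (auto simp: pa_simps)
      then show ?thesis using finV by (auto simp: pa_simps qpaths_def)
    qed
  next
    fix x :: "('v, 'a) qpath \<Rightarrow> 'k"
    assume x: "x \<in> carrier (path_algebra Q)"
    show "\<one>\<^bsub>path_algebra Q\<^esub> \<otimes>\<^bsub>path_algebra Q\<^esub> x = x"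
    proof
      fix p :: "('v, 'a) qpath"
      show "(\<one>\<^bsub>path_algebra Q\<^esub> \<otimes>\<^bsub>path_algebra Q\<^esub> x) p = x p"
        using x unfolding pa_one_vset vset_mult by (cases p) (auto simp: pa_simps qpaths_def)
    qed
    show "x \<otimes>\<^bsub>path_algebra Q\<^esub> \<one>\<^bsub>path_algebra Q\<^esub> = x"
    proof
      fix p :: "('v, 'a) qpath"
      obtain v xs where p: "p = (v, xs)" by (cases p)
      show "(x \<otimes>\<^bsub>path_algebra Q\<^esub> \<one>\<^bsub>path_algebra Q\<^esub>) p = x p"
        using x ptgt_in_verts[OF _ tgtQ, of v xs] unfolding pa_one_vset mult_vset p
        by (auto simp: pa_simps)
    qed
  qed (auto simp: pa_mult_assoc pa_mult_closed[OF tgtQ])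
next
  fix x y z :: "('v, 'a) qpath \<Rightarrow> 'k"
  show "(x \<oplus>\<^bsub>path_algebra Q\<^esub> y) \<otimes>\<^bsub>path_algebra Q\<^esub> z =
      x \<otimes>\<^bsub>path_algebra Q\<^esub> z \<oplus>\<^bsub>path_algebra Q\<^esub> y \<otimes>\<^bsub>path_algebra Q\<^esub> z"
  proof
    fix p :: "('v, 'a) qpath"
    show "((x \<oplus>\<^bsub>path_algebra Q\<^esub> y) \<otimes>\<^bsub>path_algebra Q\<^esub> z) p =
      (x \<otimes>\<^bsub>path_algebra Q\<^esub> z \<oplus>\<^bsub>path_algebra Q\<^esub> y \<otimes>\<^bsub>path_algebra Q\<^esub> z) p"
      by (cases p) (simp add: pa_mult pa_simps sum.distrib algebra_simps)
  qed
  show "z \<otimes>\<^bsub>path_algebra Q\<^esub> (x \<oplus>\<^bsub>path_algebra Q\<^esub> y) =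
      z \<otimes>\<^bsub>path_algebra Q\<^esub> x \<oplus>\<^bsub>path_algebra Q\<^esub> z \<otimes>\<^bsub>path_algebra Q\<^esub> y"
  proof
    fix p :: "('v, 'a) qpath"
    show "(z \<otimes>\<^bsub>path_algebra Q\<^esub> (x \<oplus>\<^bsub>path_algebra Q\<^esub> y)) p =
      (z \<otimes>\<^bsub>path_algebra Q\<^esub> x \<oplus>\<^bsub>path_algebra Q\<^esub> z \<otimes>\<^bsub>path_algebra Q\<^esub> y) p"
      by (cases p) (simp add: pa_mult pa_simps sum.distrib algebra_simps)
  qed
qed



lemma corner_ring_simps:
  "carrier (corner_ring R e) = {e \<otimes>\<^bsub>R\<^esub> x \<otimes>\<^bsub>R\<^esub> e | x. x \<in> carrier R}"
  "mult (corner_ring R e) = mult R" "one (corner_ring R e) = e"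
  "zero (corner_ring R e) = \<zero>\<^bsub>R\<^esub>" "add (corner_ring R e) = add R"
  by (simp_all add: corner_ring_def)

lemma rcm_simps:
  "carrier (right_corner_module R e) = {x \<otimes>\<^bsub>R\<^esub> e | x. x \<in> carrier R}"
  "zero (right_corner_module R e) = \<zero>\<^bsub>R\<^esub>" "add (right_corner_module R e) = add R"
  "smult (right_corner_module R e) = (\<lambda>b x. x \<otimes>\<^bsub>R\<^esub> b)"
  by (simp_all add: right_corner_module_def)

lemma lcm_simps:
  "carrier (left_corner_module R e) = {e \<otimes>\<^bsub>R\<^esub> x | x. x \<in> carrier R}"
  "zero (left_corner_module R e) = \<zero>\<^bsub>R\<^esub>" "add (left_corner_module R e) = add R"
  "smult (left_corner_module R e) = (\<lambda>b x. b \<otimes>\<^bsub>R\<^esub> x)"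
  by (simp_all add: left_corner_module_def)

context ring
begin

lemma corner_carrier_iff:
  assumes "e \<in> carrier R" "e \<otimes> e = e"
  shows "b \<in> carrier (corner_ring R e) \<longleftrightarrow> b \<in> carrier R \<and> e \<otimes> b = b \<and> b \<otimes> e = b"
proof
  assume "b \<in> carrier (corner_ring R e)"
  then obtain x where x: "x \<in> carrier R" "b = e \<otimes> x \<otimes> e" by (auto simp: corner_ring_simps)
  then show "b \<in> carrier R \<and> e \<otimes> b = b \<and> b \<otimes> e = b"
    using assms by (simp add: m_assoc[symmetric])  (simp add: m_assoc)
next
  assume "b \<in> carrier R \<and> e \<otimes> b = b \<and> b \<otimes> e = b"
  then show "b \<in> carrier (corner_ring R e)"
    by (auto simp: corner_ring_simps intro!: exI[of _ b])
qed

lemma rcm_carrier_iff: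
  assumes "e \<in> carrier R" "e \<otimes> e = e"
  shows "y \<in> carrier (right_corner_module R e) \<longleftrightarrow> y \<in> carrier R \<and> y \<otimes> e = y"
proof
  assume "y \<in> carrier (right_corner_module R e)"
  then obtain x where x: "x \<in> carrier R" "y = x \<otimes> e" by (auto simp: rcm_simps)
  then show "y \<in> carrier R \<and> y \<otimes> e = y" using assms by (simp add: m_assoc)
qed (auto simp: rcm_simps intro!: exI[of _ y])

lemma lcm_carrier_iff:
  assumes "e \<in> carrier R" "e \<otimes> e = e"
  shows "y \<in> carrier (left_corner_module R e) \<longleftrightarrow> y \<in> carrier R \<and> e \<otimes> y = y"
proof
  assume "y \<in> carrier (left_corner_module R e)"
  then obtain x where x: "x \<in> carrier R" "y = e \<otimes> x" by (auto simp: lcm_simps)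
  then show "y \<in> carrier R \<and> e \<otimes> y = y" using assms by (simp add: m_assoc[symmetric])
qed (auto simp: lcm_simps intro!: exI[of _ y])

lemma corner_ring_is_ring:
  assumes e: "e \<in> carrier R" "e \<otimes> e = e"
  shows "ring (corner_ring R e)"
proof -
  note C = corner_carrier_iff[OF e]
  note S = corner_ring_simps(2-5)
  have addc: "x \<oplus> y \<in> carrier (corner_ring R e)" if "x \<in> carrier (corner_ring R e)" "y \<in> carrier (corner_ring R e)" for x y
    using that e by (simp add: C r_distr l_distr)
  have mulc: "x \<otimes> y \<in> carrier (corner_ring R e)" if "x \<in> carrier (corner_ring R e)" "y \<in> carrier (corner_ring R e)" for x y
    using that e by (simp add: C m_assoc[symmetric]) (metis m_assoc)
  have negc: "\<ominus> x \<in> carrier (corner_ring R e)" if "x \<in> carrier (corner_ring R e)" for x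
    using that e by (simp add: C l_minus r_minus)
  have zc: "\<zero> \<in> carrier (corner_ring R e)" "e \<in> carrier (corner_ring R e)" using e by (auto simp: C)
  have carr: "x \<in> carrier R" if "x \<in> carrier (corner_ring R e)" for x using that by (simp add: C)
  show ?thesis
  proof (rule ringI)
    show "abelian_group (corner_ring R e)"
    proof (rule abelian_groupI)
      fix x assume x: "x \<in> carrier (corner_ring R e)"
      then show "\<exists>y\<in>carrier (corner_ring R e). y \<oplus>\<^bsub>corner_ring R e\<^esub> x = \<zero>\<^bsub>corner_ring R e\<^esub>"
        by (intro bexI[of _ "\<ominus> x"]) (auto simp: S l_neg carr negc)
    qed (auto simp: S addc zc carr a_ac)
  next
    show "monoid (corner_ring R e)"
    proof (rule monoidI)
      fix x y assume "x \<in> carrier (corner_ring R e)" "y \<in> carrier (corner_ring R e)"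
      then show "x \<otimes>\<^bsub>corner_ring R e\<^esub> y \<in> carrier (corner_ring R e)" using mulc by (simp add: S)
    next
      show "\<one>\<^bsub>corner_ring R e\<^esub> \<in> carrier (corner_ring R e)" using zc by (simp add: S)
    next
      fix x y z assume "x \<in> carrier (corner_ring R e)" "y \<in> carrier (corner_ring R e)" "z \<in> carrier (corner_ring R e)"
      then show "x \<otimes>\<^bsub>corner_ring R e\<^esub> y \<otimes>\<^bsub>corner_ring R e\<^esub> z =
        x \<otimes>\<^bsub>corner_ring R e\<^esub> (y \<otimes>\<^bsub>corner_ring R e\<^esub> z)" by (simp add: S m_assoc carr)
    next
      fix x assume "x \<in> carrier (corner_ring R e)"
      then show "\<one>\<^bsub>corner_ring R e\<^esub> \<otimes>\<^bsub>corner_ring R e\<^esub> x = x"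
        "x \<otimes>\<^bsub>corner_ring R e\<^esub> \<one>\<^bsub>corner_ring R e\<^esub> = x" by (simp_all add: S C)
    qed
  qed (auto simp: S r_distr l_distr carr)
qed

end

lemma module_smult_zero:
  assumes "abelian_group M" "a \<odot>\<^bsub>M\<^esub> (\<zero>\<^bsub>M\<^esub> \<oplus>\<^bsub>M\<^esub> \<zero>\<^bsub>M\<^esub>) = a \<odot>\<^bsub>M\<^esub> \<zero>\<^bsub>M\<^esub> \<oplus>\<^bsub>M\<^esub> a \<odot>\<^bsub>M\<^esub> \<zero>\<^bsub>M\<^esub>"
    "a \<odot>\<^bsub>M\<^esub> \<zero>\<^bsub>M\<^esub> \<in> carrier M"
  shows "a \<odot>\<^bsub>M\<^esub> \<zero>\<^bsub>M\<^esub> = \<zero>\<^bsub>M\<^esub>"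
proof -
  interpret abelian_group M by fact
  have "a \<odot>\<^bsub>M\<^esub> \<zero>\<^bsub>M\<^esub> \<oplus>\<^bsub>M\<^esub> a \<odot>\<^bsub>M\<^esub> \<zero>\<^bsub>M\<^esub> = a \<odot>\<^bsub>M\<^esub> \<zero>\<^bsub>M\<^esub>"
    using assms by simp
  then show ?thesis using assms(3) by simp
qed

lemma hom_zero:
  assumes "abelian_group M" "abelian_group N" "h \<in> carrier M \<rightarrow> carrier N"
    "\<forall>x\<in>carrier M. \<forall>y\<in>carrier M. h (x \<oplus>\<^bsub>M\<^esub> y) = h x \<oplus>\<^bsub>N\<^esub> h y"
  shows "h \<zero>\<^bsub>M\<^esub> = \<zero>\<^bsub>N\<^esub>"
proof -
  interpret M: abelian_group M by fact
  interpret N: abelian_group N by fact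
  have z: "h \<zero>\<^bsub>M\<^esub> \<in> carrier N" using assms(3) by auto
  have "h \<zero>\<^bsub>M\<^esub> \<oplus>\<^bsub>N\<^esub> h \<zero>\<^bsub>M\<^esub> = h \<zero>\<^bsub>M\<^esub>"
    using assms(4) z by (metis M.l_zero M.zero_closed)
  then show ?thesis using z by simp
qed

lemma hom_finsum:
  assumes "abelian_group M" "abelian_group N" "h \<in> carrier M \<rightarrow> carrier N"
    "\<forall>x\<in>carrier M. \<forall>y\<in>carrier M. h (x \<oplus>\<^bsub>M\<^esub> y) = h x \<oplus>\<^bsub>N\<^esub> h y"
    "finite I" "F \<in> I \<rightarrow> carrier M"
  shows "h (finsum M F I) = finsum N (\<lambda>i. h (F i)) I"
  using assms(5,6)
proof (induction I rule: finite_induct)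
  case empty
  interpret M: abelian_group M by fact
  interpret N: abelian_group N by fact
  show ?case using hom_zero[OF assms(1-4)] by simp
next
  case (insert i I)
  interpret M: abelian_group M by fact
  interpret N: abelian_group N by fact
  have hF: "(\<lambda>i. h (F i)) \<in> I \<rightarrow> carrier N" "h (F i) \<in> carrier N"
    using insert assms(3) by auto
  show ?case using insert hF assms(3,4)
    by (simp add: M.finsum_insert N.finsum_insert M.finsum_closed Pi_def)
qed

lemma finsum_sub:
  assumes "abelian_group M" "abelian_group N" "carrier N \<subseteq> carrier M"
    "\<forall>x\<in>carrier N. \<forall>y\<in>carrier N. x \<oplus>\<^bsub>N\<^esub> y = x \<oplus>\<^bsub>M\<^esub> y" "\<zero>\<^bsub>N\<^esub> = \<zero>\<^bsub>M\<^esub>"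
    "finite I" "F \<in> I \<rightarrow> carrier N"
  shows "finsum N F I = finsum M F I"
  using assms(6,7)
proof (induction I rule: finite_induct)
  case empty
  interpret M: abelian_group M by fact
  interpret N: abelian_group N by fact
  show ?case using assms(5) by simp
next
  case (insert i I)
  interpret M: abelian_group M by fact
  interpret N: abelian_group N by fact
  have "F \<in> I \<rightarrow> carrier N" "F i \<in> carrier N" using insert by auto
  moreover have "F \<in> I \<rightarrow> carrier M" "F i \<in> carrier M" using insert assms(3) by auto
  moreover have "finsum N F I \<in> carrier N" using calculation(1) by (rule N.finsum_closed)
  ultimately show ?case using insert assms(3,4)
    by (auto simp: M.finsum_insert N.finsum_insert N.finsum_closed Pi_def)
qed


lemma smult_finsum:
  assumes M: "abelian_group M" and cl: "\<forall>x\<in>carrier M. a \<odot>\<^bsub>M\<^esub> x \<in> carrier M"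
    and d: "\<forall>x\<in>carrier M. \<forall>y\<in>carrier M. a \<odot>\<^bsub>M\<^esub> (x \<oplus>\<^bsub>M\<^esub> y) = a \<odot>\<^bsub>M\<^esub> x \<oplus>\<^bsub>M\<^esub> a \<odot>\<^bsub>M\<^esub> y"
    and "finite I" "F \<in> I \<rightarrow> carrier M"
  shows "a \<odot>\<^bsub>M\<^esub> finsum M F I = finsum M (\<lambda>i. a \<odot>\<^bsub>M\<^esub> F i) I"
proof -
  interpret abelian_group M by fact
  have "(\<lambda>x. a \<odot>\<^bsub>M\<^esub> x) (finsum M F I) = finsum M (\<lambda>i. (\<lambda>x. a \<odot>\<^bsub>M\<^esub> x) (F i)) I"
    by (rule hom_finsum[OF M M]) (use assms in auto)
  then show ?thesis by simp
qed

context ring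
begin

lemma right_module_rcm:
  assumes e: "e \<in> carrier R" "e \<otimes> e = e"
  shows "right_module (corner_ring R e) (right_corner_module R e)"
proof -
  note C = corner_carrier_iff[OF e] and P = rcm_carrier_iff[OF e]
  note S = corner_ring_simps(2-5) rcm_simps(2-4)
  have ag: "abelian_group (right_corner_module R e)"
  proof (rule abelian_groupI)
    fix x assume x: "x \<in> carrier (right_corner_module R e)"
    then show "\<exists>y\<in>carrier (right_corner_module R e). y \<oplus>\<^bsub>right_corner_module R e\<^esub> x = \<zero>\<^bsub>right_corner_module R e\<^esub>"
      using e by (intro bexI[of _ "\<ominus> x"]) (auto simp: S P l_neg l_minus)
  qed (use e in \<open>auto simp: S P l_distr a_ac\<close>)
  show ?thesis unfolding right_module_def
  proof (intro conjI ballI corner_ring_is_ring[OF e] ag)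
    fix a x assume "a \<in> carrier (corner_ring R e)" "x \<in> carrier (right_corner_module R e)"
    then show "a \<odot>\<^bsub>right_corner_module R e\<^esub> x \<in> carrier (right_corner_module R e)"
      using e by (simp add: S P C m_assoc)
  next
    fix a b x assume "a \<in> carrier (corner_ring R e)" "b \<in> carrier (corner_ring R e)" "x \<in> carrier (right_corner_module R e)"
    then show "(a \<oplus>\<^bsub>corner_ring R e\<^esub> b) \<odot>\<^bsub>right_corner_module R e\<^esub> x =
      a \<odot>\<^bsub>right_corner_module R e\<^esub> x \<oplus>\<^bsub>right_corner_module R e\<^esub> b \<odot>\<^bsub>right_corner_module R e\<^esub> x"
      "(a \<otimes>\<^bsub>corner_ring R e\<^esub> b) \<odot>\<^bsub>right_corner_module R e\<^esub> x =
       b \<odot>\<^bsub>right_corner_module R e\<^esub> (a \<odot>\<^bsub>right_corner_module R e\<^esub> x)"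
      by (simp_all add: S P C r_distr m_assoc)
  next
    fix a x y assume "a \<in> carrier (corner_ring R e)" "x \<in> carrier (right_corner_module R e)" "y \<in> carrier (right_corner_module R e)"
    then show "a \<odot>\<^bsub>right_corner_module R e\<^esub> (x \<oplus>\<^bsub>right_corner_module R e\<^esub> y) =
       a \<odot>\<^bsub>right_corner_module R e\<^esub> x \<oplus>\<^bsub>right_corner_module R e\<^esub> a \<odot>\<^bsub>right_corner_module R e\<^esub> y"
      by (simp add: S P C l_distr)
  next
    fix x assume "x \<in> carrier (right_corner_module R e)"
    then show "\<one>\<^bsub>corner_ring R e\<^esub> \<odot>\<^bsub>right_corner_module R e\<^esub> x = x"
      by (simp add: S P corner_ring_simps)
  qed
qed

lemma left_module_lcm:
  assumes e: "e \<in> carrier R" "e \<otimes> e = e"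
  shows "left_module (corner_ring R e) (left_corner_module R e)"
proof -
  note C = corner_carrier_iff[OF e] and P = lcm_carrier_iff[OF e]
  note S = corner_ring_simps(2-5) lcm_simps(2-4)
  have ag: "abelian_group (left_corner_module R e)"
  proof (rule abelian_groupI)
    fix x assume x: "x \<in> carrier (left_corner_module R e)"
    then show "\<exists>y\<in>carrier (left_corner_module R e). y \<oplus>\<^bsub>left_corner_module R e\<^esub> x = \<zero>\<^bsub>left_corner_module R e\<^esub>"
      using e by (intro bexI[of _ "\<ominus> x"]) (auto simp: S P l_neg r_minus)
  qed (use e in \<open>auto simp: S P r_distr a_ac\<close>)
  show ?thesis unfolding left_module_def
  proof (intro conjI ballI corner_ring_is_ring[OF e] ag)
    fix a x assume "a \<in> carrier (corner_ring R e)" "x \<in> carrier (left_corner_module R e)"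
    then show "a \<odot>\<^bsub>left_corner_module R e\<^esub> x \<in> carrier (left_corner_module R e)"
      using e by (simp add: S P C m_assoc[symmetric])
  next
    fix a b x assume "a \<in> carrier (corner_ring R e)" "b \<in> carrier (corner_ring R e)" "x \<in> carrier (left_corner_module R e)"
    then show "(a \<oplus>\<^bsub>corner_ring R e\<^esub> b) \<odot>\<^bsub>left_corner_module R e\<^esub> x =
      a \<odot>\<^bsub>left_corner_module R e\<^esub> x \<oplus>\<^bsub>left_corner_module R e\<^esub> b \<odot>\<^bsub>left_corner_module R e\<^esub> x"
      "(a \<otimes>\<^bsub>corner_ring R e\<^esub> b) \<odot>\<^bsub>left_corner_module R e\<^esub> x =
       a \<odot>\<^bsub>left_corner_module R e\<^esub> (b \<odot>\<^bsub>left_corner_module R e\<^esub> x)"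
      by (simp_all add: S P C l_distr m_assoc)
  next
    fix a x y assume "a \<in> carrier (corner_ring R e)" "x \<in> carrier (left_corner_module R e)" "y \<in> carrier (left_corner_module R e)"
    then show "a \<odot>\<^bsub>left_corner_module R e\<^esub> (x \<oplus>\<^bsub>left_corner_module R e\<^esub> y) =
       a \<odot>\<^bsub>left_corner_module R e\<^esub> x \<oplus>\<^bsub>left_corner_module R e\<^esub> a \<odot>\<^bsub>left_corner_module R e\<^esub> y"
      by (simp add: S P C r_distr)
  next
    fix x assume "x \<in> carrier (left_corner_module R e)"
    then show "\<one>\<^bsub>corner_ring R e\<^esub> \<odot>\<^bsub>left_corner_module R e\<^esub> x = x"
      by (simp add: S P corner_ring_simps)
  qed
qed

end


context ring
begin

lemma right_proj_dual:
  fixes xb :: "'i \<Rightarrow> 'a" and phi :: "'i \<Rightarrow> 'a \<Rightarrow> 'a"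
  assumes e: "e \<in> carrier R" "e \<otimes> e = e" and fin: "finite Ix"
    and xb: "\<And>i. i \<in> Ix \<Longrightarrow> xb i \<in> carrier (right_corner_module R e)"
    and pc: "\<And>i y. i \<in> Ix \<Longrightarrow> y \<in> carrier (right_corner_module R e) \<Longrightarrow> phi i y \<in> carrier (corner_ring R e)"
    and padd: "\<And>i y z. i \<in> Ix \<Longrightarrow> y \<in> carrier (right_corner_module R e) \<Longrightarrow> z \<in> carrier (right_corner_module R e)
        \<Longrightarrow> phi i (y \<oplus> z) = phi i y \<oplus> phi i z"
    and plin: "\<And>i y b. i \<in> Ix \<Longrightarrow> y \<in> carrier (right_corner_module R e) \<Longrightarrow> b \<in> carrier (corner_ring R e)
        \<Longrightarrow> phi i (y \<otimes> b) = phi i y \<otimes> b"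
    and dec: "\<And>y. y \<in> carrier (right_corner_module R e) \<Longrightarrow> y = (\<Oplus>i\<in>Ix. xb i \<otimes> phi i y)"
  shows "right_projective (corner_ring R e) (right_corner_module R e) TYPE('m) TYPE('n)"
proof -
  let ?B = "corner_ring R e" and ?P = "right_corner_module R e"
  note C = corner_carrier_iff[OF e] and PC = rcm_carrier_iff[OF e]
  note S = corner_ring_simps(2-5) rcm_simps(2-4)
  have Pmod: "right_module ?B ?P" by (rule right_module_rcm[OF e])
  have Pag: "abelian_group ?P" using Pmod by (simp add: right_module_def)
  show ?thesis unfolding right_projective_def
  proof (intro conjI Pmod allI impI)
    fix M :: "('a, 'm) module" and N :: "('a, 'n) module" and g f
    assume H: "right_module ?B M \<and> right_module ?B N \<and> g \<in> mod_hom ?B M N \<and> g ` carrier M = carrier N \<and>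
       f \<in> mod_hom ?B ?P N"
    then have Mm: "right_module ?B M" and Nm: "right_module ?B N" and gh: "g \<in> mod_hom ?B M N"
      and gs: "g ` carrier M = carrier N" and fh: "f \<in> mod_hom ?B ?P N" by auto
    have Mag: "abelian_group M" and Nag: "abelian_group N" using Mm Nm by (auto simp: right_module_def)
    interpret M: abelian_group M by fact
    interpret N: abelian_group N by fact
    have fxb: "f (xb i) \<in> g ` carrier M" if "i \<in> Ix" for i
      using fh xb[OF that] gs by (auto simp: mod_hom_def)
    have "\<forall>i\<in>Ix. \<exists>y. y \<in> carrier M \<and> g y = f (xb i)" using fxb by (metis imageE)
    then obtain m where m0: "\<forall>i\<in>Ix. m i \<in> carrier M \<and> g (m i) = f (xb i)"
      by (auto dest!: bchoice)
    then have m: "\<And>i. i \<in> Ix \<Longrightarrow> m i \<in> carrier M \<and> g (m i) = f (xb i)" by blast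
    define h where "h = (\<lambda>y. finsum M (\<lambda>i. phi i y \<odot>\<^bsub>M\<^esub> m i) Ix)"
    have Msm: "a \<odot>\<^bsub>M\<^esub> x \<in> carrier M" if "a \<in> carrier ?B" "x \<in> carrier M" for a x
      using Mm that by (simp add: right_module_def)
    have terms: "(\<lambda>i. phi i y \<odot>\<^bsub>M\<^esub> m i) \<in> Ix \<rightarrow> carrier M" if "y \<in> carrier ?P" for y
      using Msm pc m that by auto
    have hc: "h \<in> carrier ?P \<rightarrow> carrier M"
      unfolding h_def using terms by (auto intro: M.finsum_closed)
    have hadd: "h (x \<oplus>\<^bsub>?P\<^esub> y) = h x \<oplus>\<^bsub>M\<^esub> h y" if "x \<in> carrier ?P" "y \<in> carrier ?P" for x y
    proof -
      have "h (x \<oplus>\<^bsub>?P\<^esub> y) = finsum M (\<lambda>i. phi i x \<odot>\<^bsub>M\<^esub> m i \<oplus>\<^bsub>M\<^esub> phi i y \<odot>\<^bsub>M\<^esub> m i) Ix"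
        unfolding h_def
      proof (rule M.finsum_cong')
        fix i assume i: "i \<in> Ix"
        have "phi i (x \<oplus>\<^bsub>?P\<^esub> y) = phi i x \<oplus>\<^bsub>?B\<^esub> phi i y"
          using padd[OF i that] by (simp add: S)
        then show "phi i (x \<oplus>\<^bsub>?P\<^esub> y) \<odot>\<^bsub>M\<^esub> m i = phi i x \<odot>\<^bsub>M\<^esub> m i \<oplus>\<^bsub>M\<^esub> phi i y \<odot>\<^bsub>M\<^esub> m i"
          using Mm pc[OF i] that m[OF i] by (simp add: right_module_def)
      qed (use terms that in \<open>auto simp: Pi_def intro!: M.add.m_closed\<close>)
      also have "\<dots> = h x \<oplus>\<^bsub>M\<^esub> h y"
        unfolding h_def using terms that by (simp add: M.finsum_addf)
      finally show ?thesis .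
    qed
    have hlin: "h (a \<odot>\<^bsub>?P\<^esub> x) = a \<odot>\<^bsub>M\<^esub> h x" if "a \<in> carrier ?B" "x \<in> carrier ?P" for a x
    proof -
      have "h (a \<odot>\<^bsub>?P\<^esub> x) = finsum M (\<lambda>i. a \<odot>\<^bsub>M\<^esub> (phi i x \<odot>\<^bsub>M\<^esub> m i)) Ix"
        unfolding h_def
      proof (rule M.finsum_cong')
        fix i assume i: "i \<in> Ix"
        have "phi i (a \<odot>\<^bsub>?P\<^esub> x) = phi i x \<otimes>\<^bsub>?B\<^esub> a"
          using plin[OF i that(2,1)] by (simp add: S)
        then show "phi i (a \<odot>\<^bsub>?P\<^esub> x) \<odot>\<^bsub>M\<^esub> m i = a \<odot>\<^bsub>M\<^esub> (phi i x \<odot>\<^bsub>M\<^esub> m i)"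
          using Mm pc[OF i] that m[OF i] by (simp add: right_module_def)
      qed (use terms that Msm in \<open>auto simp: Pi_def\<close>)
      also have "\<dots> = a \<odot>\<^bsub>M\<^esub> h x"
        unfolding h_def using terms[OF that(2)] Mm that fin
        by (intro smult_finsum[symmetric] Mag) (auto simp: right_module_def)
      finally show ?thesis .
    qed
    have hh: "h \<in> mod_hom ?B ?P M" unfolding mod_hom_def using hc hadd hlin by auto
    have "g (h x) = f x" if x: "x \<in> carrier ?P" for x
    proof -
      have gc: "g \<in> carrier M \<rightarrow> carrier N" and gadd: "\<forall>x\<in>carrier M. \<forall>y\<in>carrier M. g (x \<oplus>\<^bsub>M\<^esub> y) = g x \<oplus>\<^bsub>N\<^esub> g y"
        using gh by (auto simp: mod_hom_def)
      have fc: "f \<in> carrier ?P \<rightarrow> carrier N" and fadd: "\<forall>x\<in>carrier ?P. \<forall>y\<in>carrier ?P. f (x \<oplus>\<^bsub>?P\<^esub> y) = f x \<oplus>\<^bsub>N\<^esub> f y"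
        using fh by (auto simp: mod_hom_def)
      have t2: "(\<lambda>i. xb i \<otimes> phi i x) \<in> Ix \<rightarrow> carrier ?P"
      proof
        fix i assume i: "i \<in> Ix"
        show "xb i \<otimes> phi i x \<in> carrier ?P" using xb[OF i] pc[OF i x] e by (simp add: PC C m_assoc)
      qed
      have "g (h x) = finsum N (\<lambda>i. g (phi i x \<odot>\<^bsub>M\<^esub> m i)) Ix"
        unfolding h_def by (rule hom_finsum[OF Mag Nag gc gadd fin terms[OF x]])
      also have "\<dots> = finsum N (\<lambda>i. f (xb i \<otimes> phi i x)) Ix"
      proof (rule N.finsum_cong')
        fix i assume i: "i \<in> Ix"
        have "g (phi i x \<odot>\<^bsub>M\<^esub> m i) = phi i x \<odot>\<^bsub>N\<^esub> g (m i)"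
          using gh pc[OF i x] m[OF i] by (auto simp: mod_hom_def)
        also have "\<dots> = phi i x \<odot>\<^bsub>N\<^esub> f (xb i)" using m[OF i] by simp
        also have "\<dots> = f (phi i x \<odot>\<^bsub>?P\<^esub> xb i)"
          using fh pc[OF i x] xb[OF i] by (auto simp: mod_hom_def)
        also have "\<dots> = f (xb i \<otimes> phi i x)" by (simp add: S)
        finally show "g (phi i x \<odot>\<^bsub>M\<^esub> m i) = f (xb i \<otimes> phi i x)" .
      qed (use t2 fc in auto)
      also have "\<dots> = f (finsum ?P (\<lambda>i. xb i \<otimes> phi i x) Ix)"
        by (rule hom_finsum[OF Pag Nag fc fadd fin t2, symmetric])
      also have "finsum ?P (\<lambda>i. xb i \<otimes> phi i x) Ix = (\<Oplus>i\<in>Ix. xb i \<otimes> phi i x)"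
        by (rule finsum_sub[OF is_abelian_group Pag _ _ _ fin t2]) (auto simp: S PC)
      also have "\<dots> = x" using dec[OF x] by simp
      finally show ?thesis .
    qed
    then show "\<exists>h\<in>mod_hom ?B ?P M. \<forall>x\<in>carrier ?P. g (h x) = f x" using hh by blast
  qed
qed

lemma left_proj_dual:
  fixes xb :: "'i \<Rightarrow> 'a" and phi :: "'i \<Rightarrow> 'a \<Rightarrow> 'a"
  assumes e: "e \<in> carrier R" "e \<otimes> e = e" and fin: "finite Ix"
    and xb: "\<And>i. i \<in> Ix \<Longrightarrow> xb i \<in> carrier (left_corner_module R e)"
    and pc: "\<And>i y. i \<in> Ix \<Longrightarrow> y \<in> carrier (left_corner_module R e) \<Longrightarrow> phi i y \<in> carrier (corner_ring R e)"
    and padd: "\<And>i y z. i \<in> Ix \<Longrightarrow> y \<in> carrier (left_corner_module R e) \<Longrightarrow> z \<in> carrier (left_corner_module R e)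
        \<Longrightarrow> phi i (y \<oplus> z) = phi i y \<oplus> phi i z"
    and plin: "\<And>i y b. i \<in> Ix \<Longrightarrow> y \<in> carrier (left_corner_module R e) \<Longrightarrow> b \<in> carrier (corner_ring R e)
        \<Longrightarrow> phi i (b \<otimes> y) = b \<otimes> phi i y"
    and dec: "\<And>y. y \<in> carrier (left_corner_module R e) \<Longrightarrow> y = (\<Oplus>i\<in>Ix. phi i y \<otimes> xb i)"
  shows "left_projective (corner_ring R e) (left_corner_module R e) TYPE('m) TYPE('n)"
proof -
  let ?B = "corner_ring R e" and ?P = "left_corner_module R e"
  note C = corner_carrier_iff[OF e] and PC = lcm_carrier_iff[OF e]
  note S = corner_ring_simps(2-5) lcm_simps(2-4)
  have Pmod: "left_module ?B ?P" by (rule left_module_lcm[OF e])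
  have Pag: "abelian_group ?P" using Pmod by (simp add: left_module_def)
  show ?thesis unfolding left_projective_def
  proof (intro conjI Pmod allI impI)
    fix M :: "('a, 'm) module" and N :: "('a, 'n) module" and g f
    assume H: "left_module ?B M \<and> left_module ?B N \<and> g \<in> mod_hom ?B M N \<and> g ` carrier M = carrier N \<and>
       f \<in> mod_hom ?B ?P N"
    then have Mm: "left_module ?B M" and Nm: "left_module ?B N" and gh: "g \<in> mod_hom ?B M N"
      and gs: "g ` carrier M = carrier N" and fh: "f \<in> mod_hom ?B ?P N" by auto
    have Mag: "abelian_group M" and Nag: "abelian_group N" using Mm Nm by (auto simp: left_module_def)
    interpret M: abelian_group M by fact
    interpret N: abelian_group N by fact
    have fxb: "f (xb i) \<in> g ` carrier M" if "i \<in> Ix" for i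
      using fh xb[OF that] gs by (auto simp: mod_hom_def)
    have "\<forall>i\<in>Ix. \<exists>y. y \<in> carrier M \<and> g y = f (xb i)" using fxb by (metis imageE)
    then obtain m where m0: "\<forall>i\<in>Ix. m i \<in> carrier M \<and> g (m i) = f (xb i)"
      by (auto dest!: bchoice)
    then have m: "\<And>i. i \<in> Ix \<Longrightarrow> m i \<in> carrier M \<and> g (m i) = f (xb i)" by blast
    define h where "h = (\<lambda>y. finsum M (\<lambda>i. phi i y \<odot>\<^bsub>M\<^esub> m i) Ix)"
    have Msm: "a \<odot>\<^bsub>M\<^esub> x \<in> carrier M" if "a \<in> carrier ?B" "x \<in> carrier M" for a x
      using Mm that by (simp add: left_module_def)
    have terms: "(\<lambda>i. phi i y \<odot>\<^bsub>M\<^esub> m i) \<in> Ix \<rightarrow> carrier M" if "y \<in> carrier ?P" for y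
      using Msm pc m that by auto
    have hc: "h \<in> carrier ?P \<rightarrow> carrier M"
      unfolding h_def using terms by (auto intro: M.finsum_closed)
    have hadd: "h (x \<oplus>\<^bsub>?P\<^esub> y) = h x \<oplus>\<^bsub>M\<^esub> h y" if "x \<in> carrier ?P" "y \<in> carrier ?P" for x y
    proof -
      have "h (x \<oplus>\<^bsub>?P\<^esub> y) = finsum M (\<lambda>i. phi i x \<odot>\<^bsub>M\<^esub> m i \<oplus>\<^bsub>M\<^esub> phi i y \<odot>\<^bsub>M\<^esub> m i) Ix"
        unfolding h_def
      proof (rule M.finsum_cong')
        fix i assume i: "i \<in> Ix"
        have "phi i (x \<oplus>\<^bsub>?P\<^esub> y) = phi i x \<oplus>\<^bsub>?B\<^esub> phi i y"
          using padd[OF i that] by (simp add: S)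
        then show "phi i (x \<oplus>\<^bsub>?P\<^esub> y) \<odot>\<^bsub>M\<^esub> m i = phi i x \<odot>\<^bsub>M\<^esub> m i \<oplus>\<^bsub>M\<^esub> phi i y \<odot>\<^bsub>M\<^esub> m i"
          using Mm pc[OF i] that m[OF i] by (simp add: left_module_def)
      qed (use terms that in \<open>auto simp: Pi_def intro!: M.add.m_closed\<close>)
      also have "\<dots> = h x \<oplus>\<^bsub>M\<^esub> h y"
        unfolding h_def using terms that by (simp add: M.finsum_addf)
      finally show ?thesis .
    qed
    have hlin: "h (a \<odot>\<^bsub>?P\<^esub> x) = a \<odot>\<^bsub>M\<^esub> h x" if "a \<in> carrier ?B" "x \<in> carrier ?P" for a x
    proof -
      have "h (a \<odot>\<^bsub>?P\<^esub> x) = finsum M (\<lambda>i. a \<odot>\<^bsub>M\<^esub> (phi i x \<odot>\<^bsub>M\<^esub> m i)) Ix"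
        unfolding h_def
      proof (rule M.finsum_cong')
        fix i assume i: "i \<in> Ix"
        have "phi i (a \<odot>\<^bsub>?P\<^esub> x) = a \<otimes>\<^bsub>?B\<^esub> phi i x"
          using plin[OF i that(2,1)] by (simp add: S)
        then show "phi i (a \<odot>\<^bsub>?P\<^esub> x) \<odot>\<^bsub>M\<^esub> m i = a \<odot>\<^bsub>M\<^esub> (phi i x \<odot>\<^bsub>M\<^esub> m i)"
          using Mm pc[OF i] that m[OF i] by (simp add: left_module_def)
      qed (use terms that Msm in \<open>auto simp: Pi_def\<close>)
      also have "\<dots> = a \<odot>\<^bsub>M\<^esub> h x"
        unfolding h_def using terms[OF that(2)] Mm that fin
        by (intro smult_finsum[symmetric] Mag) (auto simp: left_module_def)
      finally show ?thesis .
    qed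
    have hh: "h \<in> mod_hom ?B ?P M" unfolding mod_hom_def using hc hadd hlin by auto
    have "g (h x) = f x" if x: "x \<in> carrier ?P" for x
    proof -
      have gc: "g \<in> carrier M \<rightarrow> carrier N" and gadd: "\<forall>x\<in>carrier M. \<forall>y\<in>carrier M. g (x \<oplus>\<^bsub>M\<^esub> y) = g x \<oplus>\<^bsub>N\<^esub> g y"
        using gh by (auto simp: mod_hom_def)
      have fc: "f \<in> carrier ?P \<rightarrow> carrier N" and fadd: "\<forall>x\<in>carrier ?P. \<forall>y\<in>carrier ?P. f (x \<oplus>\<^bsub>?P\<^esub> y) = f x \<oplus>\<^bsub>N\<^esub> f y"
        using fh by (auto simp: mod_hom_def)
      have t2: "(\<lambda>i. phi i x \<otimes> xb i) \<in> Ix \<rightarrow> carrier ?P"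
      proof
        fix i assume i: "i \<in> Ix"
        show "phi i x \<otimes> xb i \<in> carrier ?P" using xb[OF i] pc[OF i x] e by (simp add: PC C m_assoc[symmetric])
      qed
      have "g (h x) = finsum N (\<lambda>i. g (phi i x \<odot>\<^bsub>M\<^esub> m i)) Ix"
        unfolding h_def by (rule hom_finsum[OF Mag Nag gc gadd fin terms[OF x]])
      also have "\<dots> = finsum N (\<lambda>i. f (phi i x \<otimes> xb i)) Ix"
      proof (rule N.finsum_cong')
        fix i assume i: "i \<in> Ix"
        have "g (phi i x \<odot>\<^bsub>M\<^esub> m i) = phi i x \<odot>\<^bsub>N\<^esub> g (m i)"
          using gh pc[OF i x] m[OF i] by (auto simp: mod_hom_def)
        also have "\<dots> = phi i x \<odot>\<^bsub>N\<^esub> f (xb i)" using m[OF i] by simp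
        also have "\<dots> = f (phi i x \<odot>\<^bsub>?P\<^esub> xb i)"
          using fh pc[OF i x] xb[OF i] by (auto simp: mod_hom_def)
        also have "\<dots> = f (phi i x \<otimes> xb i)" by (simp add: S)
        finally show "g (phi i x \<odot>\<^bsub>M\<^esub> m i) = f (phi i x \<otimes> xb i)" .
      qed (use t2 fc in auto)
      also have "\<dots> = f (finsum ?P (\<lambda>i. phi i x \<otimes> xb i) Ix)"
        by (rule hom_finsum[OF Pag Nag fc fadd fin t2, symmetric])
      also have "finsum ?P (\<lambda>i. phi i x \<otimes> xb i) Ix = (\<Oplus>i\<in>Ix. phi i x \<otimes> xb i)"
        by (rule finsum_sub[OF is_abelian_group Pag _ _ _ fin t2]) (auto simp: S PC)
      also have "\<dots> = x" using dec[OF x] by simp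
      finally show ?thesis .
    qed
    then show "\<exists>h\<in>mod_hom ?B ?P M. \<forall>x\<in>carrier ?P. g (h x) = f x" using hh by blast
  qed
qed

end



definition smul :: "'k::field \<Rightarrow> (('v, 'a) qpath \<Rightarrow> 'k) \<Rightarrow> ('v, 'a) qpath \<Rightarrow> 'k" where
  "smul c f = (\<lambda>p. c * f p)"

definition L1 :: "('v, 'a) quiver \<Rightarrow> 'v \<Rightarrow> 'a \<Rightarrow> (('v, 'a) qpath \<Rightarrow> 'k::field) \<Rightarrow> ('v, 'a) qpath \<Rightarrow> 'k" where
  "L1 Q u a f = (\<lambda>q. if fst q = tgt Q a then f (u, a # snd q) else 0)"

definition R1 :: "('v, 'a) quiver \<Rightarrow> 'a \<Rightarrow> (('v, 'a) qpath \<Rightarrow> 'k::field) \<Rightarrow> ('v, 'a) qpath \<Rightarrow> 'k" where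
  "R1 Q a f = (\<lambda>q. if ptgt Q q = src Q a then f (fst q, snd q @ [a]) else 0)"

definition ends_in :: "('v, 'a) quiver \<Rightarrow> 'v set \<Rightarrow> (('v, 'a) qpath \<Rightarrow> 'k::field) \<Rightarrow> bool" where
  "ends_in Q E f \<longleftrightarrow> (\<forall>p. f p \<noteq> 0 \<longrightarrow> ptgt Q p \<in> E)"

definition starts_in :: "'v set \<Rightarrow> (('v, 'a) qpath \<Rightarrow> 'k::field) \<Rightarrow> bool" where
  "starts_in E f \<longleftrightarrow> (\<forall>p. f p \<noteq> 0 \<longrightarrow> fst p \<in> E)"

lemma pa_add_apply: "(x \<oplus>\<^bsub>path_algebra Q\<^esub> y) p = x p + y p"
  by (simp add: pa_simps)

lemma pa_zero_apply: "\<zero>\<^bsub>path_algebra Q\<^esub> p = 0"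
  by (simp add: pa_simps)

lemma vtx_vset: "vtx u = vset {u}"
  by (auto simp: vtx_def pel_def vset_def)

lemma pa_inv:
  assumes "ring (path_algebra Q :: (('v, 'a) qpath \<Rightarrow> 'k::field) ring)"
    and "f \<in> carrier (path_algebra Q :: (('v, 'a) qpath \<Rightarrow> 'k::field) ring)"
  shows "\<ominus>\<^bsub>path_algebra Q\<^esub> f = (\<lambda>p. - f p)"
proof -
  interpret ring "path_algebra Q :: (('v, 'a) qpath \<Rightarrow> 'k::field) ring" by fact
  have c: "(\<lambda>p. - f p) \<in> carrier (path_algebra Q)"
    using assms(2) by (simp add: pa_simps)
  show ?thesis
    by (rule minus_equality) (use assms(2) c in \<open>auto simp: pa_simps\<close>)
qed

lemma smul_mult: "smul c x \<otimes>\<^bsub>path_algebra Q\<^esub> y = smul c (x \<otimes>\<^bsub>path_algebra Q\<^esub> y)"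
  by (rule ext, case_tac xa) (simp add: pa_mult smul_def sum_distrib_left mult.assoc)

lemma smul_closed: "f \<in> carrier (path_algebra Q) \<Longrightarrow> smul c f \<in> carrier (path_algebra Q)"
  by (auto simp: pa_simps smul_def intro: finite_subset[of _ "{p. f p \<noteq> 0}"])

lemma smul_in_ideal:
  assumes R: "ring (path_algebra Q :: (('v, 'a) qpath \<Rightarrow> 'k::field) ring)"
    and K: "ideal K (path_algebra Q)" and f: "f \<in> K"
  shows "smul c f \<in> K"
proof -
  interpret ring "path_algebra Q :: (('v, 'a) qpath \<Rightarrow> 'k::field) ring" by fact
  interpret ideal K "path_algebra Q" by fact
  have fc: "f \<in> carrier (path_algebra Q)" using f a_Hcarr by blast
  have "smul c f = smul c \<one>\<^bsub>path_algebra Q\<^esub> \<otimes>\<^bsub>path_algebra Q\<^esub> f"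
    using fc by (simp add: smul_mult)
  also have "\<dots> \<in> K" using f smul_closed[OF one_closed] by (rule I_l_closed)
  finally show ?thesis .
qed

lemma L1_closed:
  assumes "\<forall>a\<in>arrs Q. tgt Q a \<in> verts Q" "f \<in> carrier (path_algebra Q)"
  shows "L1 Q u a f \<in> carrier (path_algebra Q)"
proof -
  have sub: "{q. L1 Q u a f q \<noteq> 0} \<subseteq> (\<lambda>q. (tgt Q a, tl (snd q))) ` {p. f p \<noteq> 0}"
    by (auto simp: L1_def intro!: image_eqI)
  have sub2: "{q. L1 Q u a f q \<noteq> 0} \<subseteq> qpaths Q"
  proof
    fix q assume "q \<in> {q. L1 Q u a f q \<noteq> 0}"
    then have q: "fst q = tgt Q a" "f (u, a # snd q) \<noteq> 0" by (auto simp: L1_def split: if_splits)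
    then have "(u, a # snd q) \<in> qpaths Q" using assms(2) by (auto simp: pa_simps)
    then show "q \<in> qpaths Q" using q assms(1) by (cases q) (auto simp: qpaths_iff)
  qed
  show ?thesis using assms(2) sub sub2 by (auto simp: pa_simps intro: finite_subset)
qed

lemma R1_closed:
  assumes "\<forall>a\<in>arrs Q. tgt Q a \<in> verts Q" "f \<in> carrier (path_algebra Q)"
  shows "R1 Q a f \<in> carrier (path_algebra Q)"
proof -
  have sub: "{q. R1 Q a f q \<noteq> 0} \<subseteq> (\<lambda>q. (fst q, butlast (snd q))) ` {p. f p \<noteq> 0}"
    by (auto simp: R1_def intro!: image_eqI)
  have sub2: "{q. R1 Q a f q \<noteq> 0} \<subseteq> qpaths Q"
  proof
    fix q assume "q \<in> {q. R1 Q a f q \<noteq> 0}"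
    then have q: "f (fst q, snd q @ [a]) \<noteq> 0" by (auto simp: R1_def split: if_splits)
    then have "(fst q, snd q @ [a]) \<in> qpaths Q" using assms(2) by (auto simp: pa_simps)
    then show "q \<in> qpaths Q" using qpaths_split[OF assms(1)] by (cases q) auto
  qed
  show ?thesis using assms(2) sub sub2 by (auto simp: pa_simps intro: finite_subset)
qed

lemma L1_mult:
  fixes Q :: "('v, 'a) quiver" and x y :: "('v, 'a) qpath \<Rightarrow> 'k::field"
  shows "L1 Q u a (x \<otimes>\<^bsub>path_algebra Q\<^esub> y) =
     (L1 Q u a x \<otimes>\<^bsub>path_algebra Q\<^esub> y) \<oplus>\<^bsub>path_algebra Q\<^esub> smul (x (u, [])) (L1 Q u a y)"
proof
  fix q :: "('v, 'a) qpath"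
  obtain w qs where q: "q = (w, qs)" by (cases q)
  show "L1 Q u a (x \<otimes>\<^bsub>path_algebra Q\<^esub> y) q =
     ((L1 Q u a x \<otimes>\<^bsub>path_algebra Q\<^esub> y) \<oplus>\<^bsub>path_algebra Q\<^esub> smul (x (u, [])) (L1 Q u a y)) q"
  proof (cases "w = tgt Q a")
    case True
    have "L1 Q u a (x \<otimes>\<^bsub>path_algebra Q\<^esub> y) q = (x \<otimes>\<^bsub>path_algebra Q\<^esub> y) (u, a # qs)"
      by (simp add: L1_def q True)
    also have "\<dots> = x (u, []) * y (u, a # qs) +
       (\<Sum>k\<in>{0..length qs}. x (u, a # take k qs) * y (ptgt Q (tgt Q a, take k qs), drop k qs))"
      by (simp only: pa_mult length_Cons sum.atLeast0_atMost_Suc_shift) simp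
    also have "\<dots> = ((L1 Q u a x \<otimes>\<^bsub>path_algebra Q\<^esub> y) \<oplus>\<^bsub>path_algebra Q\<^esub> smul (x (u, [])) (L1 Q u a y)) q"
      by (simp add: q pa_mult pa_simps smul_def L1_def True)
    finally show ?thesis .
  next
    case False
    then show ?thesis by (simp add: q pa_mult pa_simps smul_def L1_def)
  qed
qed

lemma R1_mult:
  fixes Q :: "('v, 'a) quiver" and x y :: "('v, 'a) qpath \<Rightarrow> 'k::field"
  shows "R1 Q a (x \<otimes>\<^bsub>path_algebra Q\<^esub> y) =
     (x \<otimes>\<^bsub>path_algebra Q\<^esub> R1 Q a y) \<oplus>\<^bsub>path_algebra Q\<^esub> smul (y (tgt Q a, [])) (R1 Q a x)"
proof
  fix q :: "('v, 'a) qpath"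
  obtain v qs where q: "q = (v, qs)" by (cases q)
  show "R1 Q a (x \<otimes>\<^bsub>path_algebra Q\<^esub> y) q =
     ((x \<otimes>\<^bsub>path_algebra Q\<^esub> R1 Q a y) \<oplus>\<^bsub>path_algebra Q\<^esub> smul (y (tgt Q a, [])) (R1 Q a x)) q"
  proof (cases "ptgt Q (v, qs) = src Q a")
    case True
    have pt: "ptgt Q (ptgt Q (v, take k qs), drop k qs) = src Q a" for k
      using True ptgt_append[of Q v "take k qs" "drop k qs"] by simp
    have "R1 Q a (x \<otimes>\<^bsub>path_algebra Q\<^esub> y) q = (x \<otimes>\<^bsub>path_algebra Q\<^esub> y) (v, qs @ [a])"
      by (simp add: R1_def q True)
    also have "\<dots> = (\<Sum>k\<in>{0..length qs}. x (v, take k qs) * y (ptgt Q (v, take k qs), drop k qs @ [a]))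
        + x (v, qs @ [a]) * y (tgt Q a, [])"
      unfolding pa_mult by (simp add: sum.atLeast0_atMost_Suc ptgt_append)
    also have "\<dots> = ((x \<otimes>\<^bsub>path_algebra Q\<^esub> R1 Q a y) \<oplus>\<^bsub>path_algebra Q\<^esub> smul (y (tgt Q a, [])) (R1 Q a x)) q"
      by (simp add: q pa_mult pa_simps smul_def R1_def True pt)
    finally show ?thesis .
  next
    case False
    have pt: "ptgt Q (ptgt Q (v, take k qs), drop k qs) \<noteq> src Q a" for k
      using False ptgt_append[of Q v "take k qs" "drop k qs"] by simp
    show ?thesis using False by (simp add: q pa_mult pa_simps smul_def R1_def pt)
  qed
qed


lemma pa_subgroupI:
  assumes R: "ring (path_algebra Q :: (('v, 'a) qpath \<Rightarrow> 'k::field) ring)"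
    and sub: "J \<subseteq> carrier (path_algebra Q :: (('v, 'a) qpath \<Rightarrow> 'k::field) ring)"
    and add: "\<And>x y. x \<in> J \<Longrightarrow> y \<in> J \<Longrightarrow> x \<oplus>\<^bsub>path_algebra Q\<^esub> y \<in> J"
    and zero: "(\<lambda>p. 0) \<in> J"
    and neg: "\<And>x. x \<in> J \<Longrightarrow> (\<lambda>p. - x p) \<in> J"
  shows "subgroup J (add_monoid (path_algebra Q :: (('v, 'a) qpath \<Rightarrow> 'k::field) ring))"
proof
  show "J \<subseteq> carrier (add_monoid (path_algebra Q :: (('v, 'a) qpath \<Rightarrow> 'k::field) ring))" using sub by simp
  fix x y assume "x \<in> J" "y \<in> J"
  then show "x \<otimes>\<^bsub>add_monoid (path_algebra Q)\<^esub> y \<in> J" using add by simp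
next
  show "\<one>\<^bsub>add_monoid (path_algebra Q :: (('v, 'a) qpath \<Rightarrow> 'k::field) ring)\<^esub> \<in> J"
    using zero by (simp add: pa_simps)
next
  fix x assume x: "x \<in> J"
  have "inv\<^bsub>add_monoid (path_algebra Q :: (('v, 'a) qpath \<Rightarrow> 'k::field) ring)\<^esub> x = \<ominus>\<^bsub>path_algebra Q\<^esub> x"
    by (simp add: a_inv_def)
  also have "\<dots> = (\<lambda>p. - x p)" using pa_inv[OF R] x sub by blast
  finally show "inv\<^bsub>add_monoid (path_algebra Q :: (('v, 'a) qpath \<Rightarrow> 'k::field) ring)\<^esub> x \<in> J"
    using neg[OF x] by simp
qed

lemma ideal_triv_vanish:
  assumes R: "ring (path_algebra Q :: (('v, 'a) qpath \<Rightarrow> 'k::field) ring)"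
    and Gs: "Gs \<subseteq> carrier (path_algebra Q :: (('v, 'a) qpath \<Rightarrow> 'k::field) ring)"
    and gen: "\<forall>g\<in>Gs. g (u, []) = 0"
    and f: "f \<in> genideal (path_algebra Q) Gs"
  shows "f (u, []) = 0"
proof -
  interpret ring "path_algebra Q :: (('v, 'a) qpath \<Rightarrow> 'k::field) ring" by fact
  let ?J = "{f \<in> carrier (path_algebra Q). f (u, []) = (0::'k)}"
  have "ideal ?J (path_algebra Q)"
  proof (rule idealI[OF R pa_subgroupI[OF R]])
    show "\<And>x y. x \<in> ?J \<Longrightarrow> y \<in> ?J \<Longrightarrow> x \<oplus>\<^bsub>path_algebra Q\<^esub> y \<in> ?J"
      by (auto simp: pa_add_apply)
    show "(\<lambda>p. 0) \<in> ?J" using zero_closed by (simp add: pa_simps)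
    show "\<And>x. x \<in> ?J \<Longrightarrow> (\<lambda>p. - x p) \<in> ?J"
      using pa_inv[OF R] a_inv_closed by (metis (mono_tags, lifting) mem_Collect_eq neg_equal_0_iff_equal)
    show "\<And>a x. a \<in> ?J \<Longrightarrow> x \<in> carrier (path_algebra Q) \<Longrightarrow> x \<otimes>\<^bsub>path_algebra Q\<^esub> a \<in> ?J"
      by (auto simp: pa_mult)
    show "\<And>a x. a \<in> ?J \<Longrightarrow> x \<in> carrier (path_algebra Q) \<Longrightarrow> a \<otimes>\<^bsub>path_algebra Q\<^esub> x \<in> ?J"
      by (auto simp: pa_mult)
  qed auto
  moreover have "Gs \<subseteq> ?J" using Gs gen by auto
  ultimately have "genideal (path_algebra Q) Gs \<subseteq> ?J" by (rule genideal_minimal)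
  then show ?thesis using f by auto
qed


lemma L1_add: "L1 Q u a (x \<oplus>\<^bsub>path_algebra Q\<^esub> y) = L1 Q u a x \<oplus>\<^bsub>path_algebra Q\<^esub> L1 Q u a y"
  by (auto simp: L1_def pa_simps)

lemma R1_add: "R1 Q a (x \<oplus>\<^bsub>path_algebra Q\<^esub> y) = R1 Q a x \<oplus>\<^bsub>path_algebra Q\<^esub> R1 Q a y"
  by (auto simp: R1_def pa_simps)

lemma plus_zero_fun: "x \<oplus>\<^bsub>path_algebra Q\<^esub> smul 0 y = x"
  by (auto simp: pa_simps smul_def)

lemma ideal_L1:
  assumes R: "ring (path_algebra Q :: (('v, 'a) qpath \<Rightarrow> 'k::field) ring)"
    and tgtQ: "\<forall>a\<in>arrs Q. tgt Q a \<in> verts Q"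
    and Gs: "Gs \<subseteq> carrier (path_algebra Q :: (('v, 'a) qpath \<Rightarrow> 'k::field) ring)"
    and gen0: "\<forall>g\<in>Gs. g (u, []) = 0"
    and genL: "\<forall>g\<in>Gs. L1 Q u a g = (\<lambda>p. 0)"
    and f: "f \<in> genideal (path_algebra Q) Gs"
  shows "L1 Q u a f \<in> genideal (path_algebra Q) Gs"
proof -
  interpret ring "path_algebra Q :: (('v, 'a) qpath \<Rightarrow> 'k::field) ring" by fact
  let ?K = "genideal (path_algebra Q) Gs"
  interpret K: ideal ?K "path_algebra Q" using genideal_ideal[OF Gs] .
  let ?J = "{f \<in> ?K. L1 Q u a f \<in> ?K}"
  have Kc: "x \<in> carrier (path_algebra Q)" if "x \<in> ?K" for x using that K.a_Hcarr by blast
  have z0K: "(\<lambda>p. 0::'k) \<in> ?K"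
    using additive_subgroup.zero_closed[OF ideal.axioms(1)[OF K.ideal_axioms]] by (simp add: pa_simps)
  have "ideal ?J (path_algebra Q)"
  proof (rule idealI[OF R pa_subgroupI[OF R]])
    show "?J \<subseteq> carrier (path_algebra Q)" using Kc by blast
    show "x \<oplus>\<^bsub>path_algebra Q\<^esub> y \<in> ?J" if "x \<in> ?J" "y \<in> ?J" for x y
    proof -
      have "x \<oplus>\<^bsub>path_algebra Q\<^esub> y \<in> ?K" using that K.a_closed by blast
      moreover have "L1 Q u a x \<oplus>\<^bsub>path_algebra Q\<^esub> L1 Q u a y \<in> ?K" using that K.a_closed by blast
      ultimately show ?thesis by (simp add: L1_add)
    qed
    have L0: "L1 Q u a (\<lambda>p. 0::'k) = (\<lambda>p. 0)" by (auto simp: L1_def)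
    then show "(\<lambda>p. 0) \<in> ?J" using z0K by simp
    show "(\<lambda>p. - x p) \<in> ?J" if x: "x \<in> ?J" for x
    proof -
      have "(\<lambda>p. - x p) = \<ominus>\<^bsub>path_algebra Q\<^esub> x" using pa_inv[OF R Kc] x by simp
      moreover have "L1 Q u a (\<lambda>p. - x p) = (\<lambda>q. - L1 Q u a x q)"
        by (rule ext) (simp add: L1_def)
      moreover have "(\<lambda>q. - L1 Q u a x q) = \<ominus>\<^bsub>path_algebra Q\<^esub> (L1 Q u a x)"
        using pa_inv[OF R L1_closed[OF tgtQ Kc]] x by simp
      ultimately show ?thesis using x by (simp add: K.a_inv_closed)
    qed
    show "x \<otimes>\<^bsub>path_algebra Q\<^esub> y \<in> ?J" if y: "y \<in> ?J" and x: "x \<in> carrier (path_algebra Q)" for x y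
    proof -
      have "L1 Q u a (x \<otimes>\<^bsub>path_algebra Q\<^esub> y) \<in> ?K"
        unfolding L1_mult using y x L1_closed[OF tgtQ x]
        by (intro K.a_closed K.I_l_closed smul_in_ideal[OF R K.ideal_axioms]) auto
      then show ?thesis using x y K.I_l_closed by blast
    qed
    show "y \<otimes>\<^bsub>path_algebra Q\<^esub> x \<in> ?J" if y: "y \<in> ?J" and x: "x \<in> carrier (path_algebra Q)" for x y
    proof -
      have "y (u, []) = 0" using ideal_triv_vanish[OF R Gs gen0] y by blast
      then have "L1 Q u a (y \<otimes>\<^bsub>path_algebra Q\<^esub> x) = L1 Q u a y \<otimes>\<^bsub>path_algebra Q\<^esub> x"
        by (simp add: L1_mult plus_zero_fun)
      then have "L1 Q u a (y \<otimes>\<^bsub>path_algebra Q\<^esub> x) \<in> ?K" using y x K.I_r_closed by simp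
      then show ?thesis using x y K.I_r_closed by blast
    qed
  qed
  moreover have "Gs \<subseteq> ?J"
    using genideal_self[OF Gs] genL z0K by auto
  ultimately have "?K \<subseteq> ?J" by (rule genideal_minimal)
  then show ?thesis using f by auto
qed


lemma ideal_R1:
  assumes R: "ring (path_algebra Q :: (('v, 'a) qpath \<Rightarrow> 'k::field) ring)"
    and tgtQ: "\<forall>a\<in>arrs Q. tgt Q a \<in> verts Q"
    and Gs: "Gs \<subseteq> carrier (path_algebra Q :: (('v, 'a) qpath \<Rightarrow> 'k::field) ring)"
    and gen0: "\<forall>g\<in>Gs. g (tgt Q a, []) = 0"
    and genL: "\<forall>g\<in>Gs. R1 Q a g = (\<lambda>p. 0)"
    and f: "f \<in> genideal (path_algebra Q) Gs"
  shows "R1 Q a f \<in> genideal (path_algebra Q) Gs"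
proof -
  interpret ring "path_algebra Q :: (('v, 'a) qpath \<Rightarrow> 'k::field) ring" by fact
  let ?K = "genideal (path_algebra Q) Gs"
  interpret K: ideal ?K "path_algebra Q" using genideal_ideal[OF Gs] .
  let ?J = "{f \<in> ?K. R1 Q a f \<in> ?K}"
  have Kc: "x \<in> carrier (path_algebra Q)" if "x \<in> ?K" for x using that K.a_Hcarr by blast
  have z0K: "(\<lambda>p. 0::'k) \<in> ?K"
    using additive_subgroup.zero_closed[OF ideal.axioms(1)[OF K.ideal_axioms]] by (simp add: pa_simps)
  have "ideal ?J (path_algebra Q)"
  proof (rule idealI[OF R pa_subgroupI[OF R]])
    show "?J \<subseteq> carrier (path_algebra Q)" using Kc by blast
    show "x \<oplus>\<^bsub>path_algebra Q\<^esub> y \<in> ?J" if "x \<in> ?J" "y \<in> ?J" for x y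
    proof -
      have "x \<oplus>\<^bsub>path_algebra Q\<^esub> y \<in> ?K" using that K.a_closed by blast
      moreover have "R1 Q a x \<oplus>\<^bsub>path_algebra Q\<^esub> R1 Q a y \<in> ?K" using that K.a_closed by blast
      ultimately show ?thesis by (simp add: R1_add)
    qed
    have L0: "R1 Q a (\<lambda>p. 0::'k) = (\<lambda>p. 0)" by (auto simp: R1_def)
    then show "(\<lambda>p. 0) \<in> ?J" using z0K by simp
    show "(\<lambda>p. - x p) \<in> ?J" if x: "x \<in> ?J" for x
    proof -
      have "(\<lambda>p. - x p) = \<ominus>\<^bsub>path_algebra Q\<^esub> x" using pa_inv[OF R Kc] x by simp
      moreover have "R1 Q a (\<lambda>p. - x p) = (\<lambda>q. - R1 Q a x q)"
        by (rule ext) (simp add: R1_def)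
      moreover have "(\<lambda>q. - R1 Q a x q) = \<ominus>\<^bsub>path_algebra Q\<^esub> (R1 Q a x)"
        using pa_inv[OF R R1_closed[OF tgtQ Kc]] x by simp
      ultimately show ?thesis using x by (simp add: K.a_inv_closed)
    qed
    show "x \<otimes>\<^bsub>path_algebra Q\<^esub> y \<in> ?J" if y: "y \<in> ?J" and x: "x \<in> carrier (path_algebra Q)" for x y
    proof -
      have "y (tgt Q a, []) = 0" using ideal_triv_vanish[OF R Gs gen0] y by blast
      then have "R1 Q a (x \<otimes>\<^bsub>path_algebra Q\<^esub> y) = x \<otimes>\<^bsub>path_algebra Q\<^esub> R1 Q a y"
        by (simp add: R1_mult plus_zero_fun)
      then have "R1 Q a (x \<otimes>\<^bsub>path_algebra Q\<^esub> y) \<in> ?K" using y x K.I_l_closed by simp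
      then show ?thesis using x y K.I_l_closed by blast
    qed
    show "y \<otimes>\<^bsub>path_algebra Q\<^esub> x \<in> ?J" if y: "y \<in> ?J" and x: "x \<in> carrier (path_algebra Q)" for x y
    proof -
      have "R1 Q a (y \<otimes>\<^bsub>path_algebra Q\<^esub> x) \<in> ?K"
        unfolding R1_mult using y x R1_closed[OF tgtQ x]
        by (intro K.a_closed K.I_r_closed smul_in_ideal[OF R K.ideal_axioms]) auto
      then show ?thesis using x y K.I_r_closed by blast
    qed
  qed
  moreover have "Gs \<subseteq> ?J"
    using genideal_self[OF Gs] genL z0K by auto
  ultimately have "?K \<subseteq> ?J" by (rule genideal_minimal)
  then show ?thesis using f by auto
qed



fun Lstrip :: "('v, 'a) quiver \<Rightarrow> 'v \<Rightarrow> 'a list \<Rightarrow> (('v, 'a) qpath \<Rightarrow> 'k::field) \<Rightarrow> ('v, 'a) qpath \<Rightarrow> 'k" where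
  "Lstrip Q u [] f = f"
| "Lstrip Q u (a # as) f = Lstrip Q (tgt Q a) as (L1 Q u a f)"

fun Rstrip :: "('v, 'a) quiver \<Rightarrow> 'a list \<Rightarrow> (('v, 'a) qpath \<Rightarrow> 'k::field) \<Rightarrow> ('v, 'a) qpath \<Rightarrow> 'k" where
  "Rstrip Q [] f = f"
| "Rstrip Q (a # rs) f = Rstrip Q rs (R1 Q a f)"

fun chainR :: "('v, 'a) quiver \<Rightarrow> 'v set \<Rightarrow> 'v \<Rightarrow> 'a list \<Rightarrow> bool" where
  "chainR Q E u [] = True"
| "chainR Q E u (a # as) = (u \<notin> E \<and> a \<in> arrs Q \<and> src Q a = u \<and> (\<forall>b\<in>arrs Q. src Q b = u \<longrightarrow> b = a)
     \<and> chainR Q E (tgt Q a) as)"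

fun chainL :: "('v, 'a) quiver \<Rightarrow> 'v set \<Rightarrow> 'v \<Rightarrow> 'a list \<Rightarrow> bool" where
  "chainL Q E w [] = True"
| "chainL Q E w (a # rs) = (w \<notin> E \<and> a \<in> arrs Q \<and> tgt Q a = w \<and> (\<forall>b\<in>arrs Q. tgt Q b = w \<longrightarrow> b = a)
     \<and> chainL Q E (src Q a) rs)"

fun psrc :: "('v, 'a) quiver \<Rightarrow> 'v \<Rightarrow> 'a list \<Rightarrow> 'v" where
  "psrc Q w [] = w"
| "psrc Q w (a # rs) = psrc Q (src Q a) rs"

lemma Lstrip_add: "Lstrip Q u as (x \<oplus>\<^bsub>path_algebra Q\<^esub> y) = Lstrip Q u as x \<oplus>\<^bsub>path_algebra Q\<^esub> Lstrip Q u as y"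
  by (induction as arbitrary: u x y) (auto simp: L1_add)

lemma Rstrip_add: "Rstrip Q rs (x \<oplus>\<^bsub>path_algebra Q\<^esub> y) = Rstrip Q rs x \<oplus>\<^bsub>path_algebra Q\<^esub> Rstrip Q rs y"
  by (induction rs arbitrary: x y) (auto simp: R1_add)

lemma L1_neg: "L1 Q u a (\<lambda>p. - x p) = (\<lambda>p. - L1 Q u a x p)"
  by (rule ext) (simp add: L1_def)

lemma R1_neg: "R1 Q a (\<lambda>p. - x p) = (\<lambda>p. - R1 Q a x p)"
  by (rule ext) (simp add: R1_def)

lemma Lstrip_neg: "Lstrip Q u as (\<lambda>p. - x p) = (\<lambda>p. - Lstrip Q u as x p)"
  by (induction as arbitrary: u x) (auto simp: L1_neg)

lemma Rstrip_neg: "Rstrip Q rs (\<lambda>p. - x p) = (\<lambda>p. - Rstrip Q rs x p)"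
  by (induction rs arbitrary: x) (auto simp: R1_neg)

lemma Lstrip_closed:
  "\<forall>a\<in>arrs Q. tgt Q a \<in> verts Q \<Longrightarrow> f \<in> carrier (path_algebra Q) \<Longrightarrow> Lstrip Q u as f \<in> carrier (path_algebra Q)"
  by (induction as arbitrary: u f) (auto simp: L1_closed)

lemma Rstrip_closed:
  "\<forall>a\<in>arrs Q. tgt Q a \<in> verts Q \<Longrightarrow> f \<in> carrier (path_algebra Q) \<Longrightarrow> Rstrip Q rs f \<in> carrier (path_algebra Q)"
  by (induction rs arbitrary: f) (auto simp: R1_closed)

lemma L1_ends: "ends_in Q E x \<Longrightarrow> ends_in Q E (L1 Q u a x)"
  unfolding ends_in_def L1_def by (metis ptgt_Cons prod.collapse)

lemma R1_starts: "starts_in E x \<Longrightarrow> starts_in E (R1 Q a x)"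
  by (auto simp: starts_in_def R1_def split: if_splits)

lemma Lstrip_ends: "ends_in Q E x \<Longrightarrow> ends_in Q E (Lstrip Q u as x)"
  by (induction as arbitrary: u x) (auto simp: L1_ends)

lemma Rstrip_starts: "starts_in E x \<Longrightarrow> starts_in E (Rstrip Q rs x)"
  by (induction rs arbitrary: x) (auto simp: R1_starts)

lemma Lstrip_starts: "starts_in {ptgt Q (u, a # as)} (Lstrip Q u (a # as) x)"
proof (induction as arbitrary: u a x)
  case Nil
  then show ?case by (auto simp: starts_in_def L1_def split: if_splits)
next
  case (Cons b as)
  show ?case using Cons[of "tgt Q a" b "L1 Q u a x"] by simp
qed

lemma Rstrip_ends: "ends_in Q {psrc Q (src Q a) rs} (Rstrip Q (a # rs) x)"
proof (induction rs arbitrary: a x)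
  case Nil
  then show ?case by (auto simp: ends_in_def R1_def split: if_splits)
next
  case (Cons b rs)
  show ?case using Cons[of b "R1 Q a x"] by simp
qed


lemma Lstrip_ideal:
  assumes R: "ring (path_algebra Q :: (('v, 'a) qpath \<Rightarrow> 'k::field) ring)"
    and tgtQ: "\<forall>a\<in>arrs Q. tgt Q a \<in> verts Q"
    and Gs: "Gs \<subseteq> carrier (path_algebra Q :: (('v, 'a) qpath \<Rightarrow> 'k::field) ring)"
    and GsE: "\<forall>g\<in>Gs. starts_in E g"
  shows "chainR Q E u as \<Longrightarrow> f \<in> genideal (path_algebra Q) Gs \<Longrightarrow> Lstrip Q u as f \<in> genideal (path_algebra Q) Gs"
proof (induction as arbitrary: u f)
  case Nil
  then show ?case by simp
next
  case (Cons a as)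
  have u: "u \<notin> E" using Cons.prems by simp
  have g0: "\<forall>g\<in>Gs. g (u, []) = 0" using GsE u by (force simp: starts_in_def)
  have gL: "\<forall>g\<in>Gs. L1 Q u a g = (\<lambda>p. 0)"
    using GsE u by (force simp: starts_in_def L1_def)
  have "L1 Q u a f \<in> genideal (path_algebra Q) Gs"
    by (rule ideal_L1[OF R tgtQ Gs g0 gL Cons.prems(2)])
  then show ?case using Cons by simp
qed

lemma Rstrip_ideal:
  assumes R: "ring (path_algebra Q :: (('v, 'a) qpath \<Rightarrow> 'k::field) ring)"
    and tgtQ: "\<forall>a\<in>arrs Q. tgt Q a \<in> verts Q"
    and Gs: "Gs \<subseteq> carrier (path_algebra Q :: (('v, 'a) qpath \<Rightarrow> 'k::field) ring)"
    and GsS: "\<forall>g\<in>Gs. starts_in E g" and GsE: "\<forall>g\<in>Gs. ends_in Q E g"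
  shows "chainL Q E w rs \<Longrightarrow> f \<in> genideal (path_algebra Q) Gs \<Longrightarrow> Rstrip Q rs f \<in> genideal (path_algebra Q) Gs"
proof (induction rs arbitrary: w f)
  case Nil
  then show ?case by simp
next
  case (Cons a rs)
  have w: "w \<notin> E" "tgt Q a = w" using Cons.prems by auto
  have g0: "\<forall>g\<in>Gs. g (tgt Q a, []) = 0" using GsS w by (force simp: starts_in_def)
  have gR: "\<forall>g\<in>Gs. R1 Q a g = (\<lambda>p. 0)"
  proof (intro ballI ext)
    fix g q assume g: "g \<in> Gs"
    show "R1 Q a g q = 0"
    proof (rule ccontr)
      assume "R1 Q a g q \<noteq> 0"
      then have "g (fst q, snd q @ [a]) \<noteq> 0" by (simp add: R1_def split: if_splits)
      then have "ptgt Q (fst q, snd q @ [a]) \<in> E" using GsE g by (auto simp: ends_in_def)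
      then show False using w by (simp add: ptgt_append)
    qed
  qed
  have "R1 Q a f \<in> genideal (path_algebra Q) Gs"
    by (rule ideal_R1[OF R tgtQ Gs g0 gR Cons.prems(2)])
  then show ?case using Cons.IH[of "src Q a" "R1 Q a f"] Cons.prems by simp
qed

lemma Lstrip_mult:
  "chainR Q E u as \<Longrightarrow> ends_in Q E z \<Longrightarrow>
    Lstrip Q u as (z \<otimes>\<^bsub>path_algebra Q\<^esub> t) = Lstrip Q u as z \<otimes>\<^bsub>path_algebra Q\<^esub> t"
proof (induction as arbitrary: u z)
  case Nil
  then show ?case by simp
next
  case (Cons a as)
  have "u \<notin> E" using Cons.prems(1) by simp
  then have "z (u, []) = 0" using Cons.prems(2) unfolding ends_in_def by (metis ptgt_Nil)
  then have "L1 Q u a (z \<otimes>\<^bsub>path_algebra Q\<^esub> t) = L1 Q u a z \<otimes>\<^bsub>path_algebra Q\<^esub> t"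
    by (simp add: L1_mult plus_zero_fun)
  then show ?case using Cons.IH[of "tgt Q a" "L1 Q u a z"] Cons.prems L1_ends[OF Cons.prems(2)] by simp
qed

lemma Rstrip_mult:
  "chainL Q E w rs \<Longrightarrow> starts_in E z \<Longrightarrow>
    Rstrip Q rs (t \<otimes>\<^bsub>path_algebra Q\<^esub> z) = t \<otimes>\<^bsub>path_algebra Q\<^esub> Rstrip Q rs z"
proof (induction rs arbitrary: w z)
  case Nil
  then show ?case by simp
next
  case (Cons a rs)
  have "z (tgt Q a, []) = 0" using Cons.prems by (auto simp: starts_in_def)
  then have "R1 Q a (t \<otimes>\<^bsub>path_algebra Q\<^esub> z) = t \<otimes>\<^bsub>path_algebra Q\<^esub> R1 Q a z"
    by (simp add: R1_mult plus_zero_fun)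
  then show ?case using Cons.IH[of "src Q a" "R1 Q a z"] Cons.prems R1_starts[OF Cons.prems(2)] by simp
qed


lemma pel_arrow_mult:
  "(pel (u, [a]) \<otimes>\<^bsub>path_algebra Q\<^esub> f) (v, xs) =
     (if v = u \<and> xs \<noteq> [] \<and> hd xs = a then f (tgt Q a, tl xs) else (0::'k::field))"
proof (cases xs)
  case Nil
  then show ?thesis by (simp add: pa_mult pel_def)
next
  case (Cons b bs)
  have "(pel (u, [a]) \<otimes>\<^bsub>path_algebra Q\<^esub> f) (v, xs) =
      pel (u, [a]) (v, take 1 xs) * f (ptgt Q (v, take 1 xs), drop 1 xs)"
    unfolding pa_mult
  proof (rule sum_single)
    fix k assume k: "k \<in> {0..length xs}" "k \<noteq> 1"
    have "take k xs \<noteq> [a]"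
    proof (cases "k = 0")
      case False
      then have "length (take k xs) \<ge> 2" using k Cons by auto
      then show ?thesis by (metis One_nat_def length_Cons list.size(3) numeral_le_one_iff semiring_norm(69))
    qed simp
    then show "pel (u, [a]) (v, take k xs) * f (ptgt Q (v, take k xs), drop k xs) = 0"
      by (simp add: pel_def)
  qed (use Cons in auto)
  then show ?thesis using Cons by (auto simp: pel_def)
qed

lemma mult_pel_arrow:
  "(f \<otimes>\<^bsub>path_algebra Q\<^esub> pel (u, [a])) (v, xs) =
     (if xs \<noteq> [] \<and> last xs = a \<and> ptgt Q (v, butlast xs) = u then f (v, butlast xs) else (0::'k::field))"
proof (cases xs rule: rev_cases)
  case Nil
  then show ?thesis by (simp add: pa_mult pel_def)
next
  case (snoc ys b)
  have "(f \<otimes>\<^bsub>path_algebra Q\<^esub> pel (u, [a])) (v, xs) =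
      f (v, take (length ys) xs) * pel (u, [a]) (ptgt Q (v, take (length ys) xs), drop (length ys) xs)"
    unfolding pa_mult
  proof (rule sum_single)
    fix k assume k: "k \<in> {0..length xs}" "k \<noteq> length ys"
    have "length (drop k xs) \<noteq> 1" using k snoc by auto
    then have "drop k xs \<noteq> [a]" by (metis One_nat_def length_Cons list.size(3))
    then show "f (v, take k xs) * pel (u, [a]) (ptgt Q (v, take k xs), drop k xs) = 0"
      by (simp add: pel_def)
  qed (use snoc in auto)
  then show ?thesis using snoc by (auto simp: pel_def)
qed

lemma pel_arrow_pel:
  fixes Q :: "('v, 'a) quiver"
  shows "pel (u, [a]) \<otimes>\<^bsub>path_algebra Q\<^esub> pel (tgt Q a, as) = (pel (u, a # as) :: _ \<Rightarrow> 'k::field)"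
proof
  fix p :: "('v, 'a) qpath"
  obtain v xs where p: "p = (v, xs)" by (cases p)
  show "(pel (u, [a]) \<otimes>\<^bsub>path_algebra Q\<^esub> pel (tgt Q a, as)) p = (pel (u, a # as) :: _ \<Rightarrow> 'k) p"
    unfolding p pel_arrow_mult by (cases xs) (auto simp: pel_def)
qed

lemma pel_pel_arrow:
  fixes Q :: "('v, 'a) quiver"
  assumes "ptgt Q (x, ys) = src Q a"
  shows "pel (x, ys) \<otimes>\<^bsub>path_algebra Q\<^esub> pel (src Q a, [a]) = (pel (x, ys @ [a]) :: _ \<Rightarrow> 'k::field)"
proof
  fix p :: "('v, 'a) qpath"
  obtain v xs where p: "p = (v, xs)" by (cases p)
  show "(pel (x, ys) \<otimes>\<^bsub>path_algebra Q\<^esub> pel (src Q a, [a])) p = (pel (x, ys @ [a]) :: _ \<Rightarrow> 'k) p"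
    unfolding p mult_pel_arrow using assms by (cases xs rule: rev_cases) (auto simp: pel_def)
qed


lemma L_single:
  fixes Q :: "('v, 'a) quiver" and z :: "('v, 'a) qpath \<Rightarrow> 'k::field"
  assumes z: "z \<in> carrier (path_algebra Q)" and ze: "ends_in Q E z" and u: "u \<notin> E"
    and uniq: "\<forall>b\<in>arrs Q. src Q b = u \<longrightarrow> b = a"
  shows "vtx u \<otimes>\<^bsub>path_algebra Q\<^esub> z = pel (u, [a]) \<otimes>\<^bsub>path_algebra Q\<^esub> L1 Q u a z"
proof
  fix p :: "('v, 'a) qpath"
  obtain v xs where p: "p = (v, xs)" by (cases p)
  have z0: "z (u, []) = 0" using ze u unfolding ends_in_def by (metis ptgt_Nil)
  have zb: "z (u, b # bs) = 0" if "b \<noteq> a" for b bs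
  proof (rule ccontr)
    assume "z (u, b # bs) \<noteq> 0"
    then have "(u, b # bs) \<in> qpaths Q" using z by (auto simp: pa_simps)
    then show False using uniq that by (auto simp: qpaths_iff)
  qed
  show "(vtx u \<otimes>\<^bsub>path_algebra Q\<^esub> z) p = (pel (u, [a]) \<otimes>\<^bsub>path_algebra Q\<^esub> L1 Q u a z) p"
    unfolding p pel_arrow_mult vtx_vset vset_mult
    by (cases xs) (auto simp: z0 zb L1_def)
qed

lemma L1_vtx: "L1 Q u a z = vtx (tgt Q a) \<otimes>\<^bsub>path_algebra Q\<^esub> L1 Q u a z"
  by (rule ext) (simp add: vtx_vset vset_mult L1_def)

lemma R1_vtx: "R1 Q a z = R1 Q a z \<otimes>\<^bsub>path_algebra Q\<^esub> vtx (src Q a)"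
  by (rule ext) (simp add: vtx_vset mult_vset R1_def)

lemma Lstrip_ident:
  fixes Q :: "('v, 'a) quiver" and z :: "('v, 'a) qpath \<Rightarrow> 'k::field"
  assumes tgtQ: "\<forall>a\<in>arrs Q. tgt Q a \<in> verts Q"
  shows "chainR Q E u as \<Longrightarrow> z \<in> carrier (path_algebra Q) \<Longrightarrow> ends_in Q E z \<Longrightarrow>
    vtx u \<otimes>\<^bsub>path_algebra Q\<^esub> z = pel (u, as) \<otimes>\<^bsub>path_algebra Q\<^esub> Lstrip Q u as z"
proof (induction as arbitrary: u z)
  case Nil
  then show ?case by (simp add: vtx_def)
next
  case (Cons a as)
  have c: "u \<notin> E" "chainR Q E (tgt Q a) as" "\<forall>b\<in>arrs Q. src Q b = u \<longrightarrow> b = a"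
    using Cons.prems(1) by auto
  have "vtx u \<otimes>\<^bsub>path_algebra Q\<^esub> z = pel (u, [a]) \<otimes>\<^bsub>path_algebra Q\<^esub> L1 Q u a z"
    by (rule L_single[OF Cons.prems(2,3) c(1,3)])
  also have "L1 Q u a z = vtx (tgt Q a) \<otimes>\<^bsub>path_algebra Q\<^esub> L1 Q u a z" by (rule L1_vtx)
  also have "\<dots> = pel (tgt Q a, as) \<otimes>\<^bsub>path_algebra Q\<^esub> Lstrip Q (tgt Q a) as (L1 Q u a z)"
    by (rule Cons.IH[OF c(2) L1_closed[OF tgtQ Cons.prems(2)] L1_ends[OF Cons.prems(3)]])
  also have "pel (u, [a]) \<otimes>\<^bsub>path_algebra Q\<^esub> (pel (tgt Q a, as) \<otimes>\<^bsub>path_algebra Q\<^esub> Lstrip Q (tgt Q a) as (L1 Q u a z))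
     = pel (u, a # as) \<otimes>\<^bsub>path_algebra Q\<^esub> Lstrip Q (tgt Q a) as (L1 Q u a z)"
    by (simp add: pa_mult_assoc[symmetric] pel_arrow_pel)
  finally show ?case by simp
qed

lemma R_single:
  fixes Q :: "('v, 'a) quiver" and z :: "('v, 'a) qpath \<Rightarrow> 'k::field"
  assumes z: "z \<in> carrier (path_algebra Q)" and zs: "starts_in E z" and w: "tgt Q a \<notin> E"
    and uniq: "\<forall>b\<in>arrs Q. tgt Q b = tgt Q a \<longrightarrow> b = a"
  shows "z \<otimes>\<^bsub>path_algebra Q\<^esub> vtx (tgt Q a) = R1 Q a z \<otimes>\<^bsub>path_algebra Q\<^esub> pel (src Q a, [a])"
proof
  fix p :: "('v, 'a) qpath"
  obtain v xs where p: "p = (v, xs)" by (cases p)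
  show "(z \<otimes>\<^bsub>path_algebra Q\<^esub> vtx (tgt Q a)) p = (R1 Q a z \<otimes>\<^bsub>path_algebra Q\<^esub> pel (src Q a, [a])) p"
    unfolding p mult_pel_arrow vtx_vset mult_vset
  proof (cases xs rule: rev_cases)
    case Nil
    have "z (v, []) = 0 \<or> v \<noteq> tgt Q a" using zs w by (auto simp: starts_in_def)
    then show "(if ptgt Q (v, xs) \<in> {tgt Q a} then z (v, xs) else 0) =
      (if xs \<noteq> [] \<and> last xs = a \<and> ptgt Q (v, butlast xs) = src Q a then R1 Q a z (v, butlast xs) else 0)"
      using Nil by auto
  next
    case (snoc ys b)
    show "(if ptgt Q (v, xs) \<in> {tgt Q a} then z (v, xs) else 0) =
      (if xs \<noteq> [] \<and> last xs = a \<and> ptgt Q (v, butlast xs) = src Q a then R1 Q a z (v, butlast xs) else 0)"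
    proof (cases "z (v, xs) = 0")
      case True
      then show ?thesis using snoc by (auto simp: R1_def)
    next
      case False
      then have q: "(v, ys @ [b]) \<in> qpaths Q" using z snoc by (auto simp: pa_simps)
      then have b: "b \<in> arrs Q" "src Q b = ptgt Q (v, ys)"
        by (auto simp: qpaths_iff composable_append)
      show ?thesis
      proof (cases "tgt Q b = tgt Q a")
        case True
        then have "b = a" using uniq b by blast
        then show ?thesis using snoc b by (auto simp: R1_def ptgt_append)
      next
        case False
        then have "b \<noteq> a" by auto
        then show ?thesis using snoc False by (auto simp: ptgt_append)
      qed
    qed
  qed
qed

lemma chainL_ptgt: "chainL Q E w rs \<Longrightarrow> ptgt Q (psrc Q w rs, rev rs) = w"
  by (induction rs arbitrary: w) (auto simp: ptgt_append)

lemma Rstrip_ident: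
  fixes Q :: "('v, 'a) quiver" and z :: "('v, 'a) qpath \<Rightarrow> 'k::field"
  assumes tgtQ: "\<forall>a\<in>arrs Q. tgt Q a \<in> verts Q"
  shows "chainL Q E w rs \<Longrightarrow> z \<in> carrier (path_algebra Q) \<Longrightarrow> starts_in E z \<Longrightarrow>
    z \<otimes>\<^bsub>path_algebra Q\<^esub> vtx w = Rstrip Q rs z \<otimes>\<^bsub>path_algebra Q\<^esub> pel (psrc Q w rs, rev rs)"
proof (induction rs arbitrary: w z)
  case Nil
  then show ?case by (simp add: vtx_def)
next
  case (Cons a rs)
  have c: "w \<notin> E" "tgt Q a = w" "chainL Q E (src Q a) rs" "\<forall>b\<in>arrs Q. tgt Q b = w \<longrightarrow> b = a"
    using Cons.prems(1) by auto
  have "z \<otimes>\<^bsub>path_algebra Q\<^esub> vtx w = R1 Q a z \<otimes>\<^bsub>path_algebra Q\<^esub> pel (src Q a, [a])"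
    using R_single[OF Cons.prems(2,3), of a] c by simp
  also have "R1 Q a z = R1 Q a z \<otimes>\<^bsub>path_algebra Q\<^esub> vtx (src Q a)" by (rule R1_vtx)
  also have "\<dots> = Rstrip Q rs (R1 Q a z) \<otimes>\<^bsub>path_algebra Q\<^esub> pel (psrc Q (src Q a) rs, rev rs)"
    by (rule Cons.IH[OF c(3) R1_closed[OF tgtQ Cons.prems(2)] R1_starts[OF Cons.prems(3)]])
  also have "(Rstrip Q rs (R1 Q a z) \<otimes>\<^bsub>path_algebra Q\<^esub> pel (psrc Q (src Q a) rs, rev rs)) \<otimes>\<^bsub>path_algebra Q\<^esub> pel (src Q a, [a])
     = Rstrip Q rs (R1 Q a z) \<otimes>\<^bsub>path_algebra Q\<^esub> pel (psrc Q (src Q a) rs, rev rs @ [a])"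
    by (simp add: pa_mult_assoc pel_pel_arrow chainL_ptgt[OF c(3)])
  finally show ?case by simp
qed



abbreviation "blk A \<beta> \<equiv> map (\<lambda>l. (\<beta>, l)) [1..<A+1]"

lemma sq_simps:
  "verts (stretch_quiver A Q) = Inl ` verts Q \<union> {Inr (\<alpha>, j) | \<alpha> j. \<alpha> \<in> arrs Q \<and> 1 \<le> j \<and> j \<le> A - 1}"
  "arrs (stretch_quiver A Q) = {(\<alpha>, j) | \<alpha> j. \<alpha> \<in> arrs Q \<and> 1 \<le> j \<and> j \<le> A}"
  "src (stretch_quiver A Q) (\<alpha>, j) = (if j = 1 then Inl (src Q \<alpha>) else Inr (\<alpha>, j - 1))"
  "tgt (stretch_quiver A Q) (\<alpha>, j) = (if j = A then Inl (tgt Q \<alpha>) else Inr (\<alpha>, j))"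
  by (simp_all add: stretch_quiver_def)

lemma sq_finite:
  assumes "finite (verts Q)" "finite (arrs Q)"
  shows "finite (verts (stretch_quiver A Q))"
proof -
  have "{Inr (\<alpha>, j) | \<alpha> j. \<alpha> \<in> arrs Q \<and> 1 \<le> j \<and> j \<le> A - 1} \<subseteq> (\<lambda>(\<alpha>, j). Inr (\<alpha>, j)) ` (arrs Q \<times> {1..A-1})"
    by auto
  moreover have "finite ((\<lambda>(\<alpha>, j). Inr (\<alpha>, j)) ` (arrs Q \<times> {1..A-1}))" using assms by simp
  ultimately have "finite {Inr (\<alpha>, j) | \<alpha> j. \<alpha> \<in> arrs Q \<and> 1 \<le> j \<and> j \<le> A - 1}"
    by (rule finite_subset)
  then show ?thesis using assms by (simp add: sq_simps)
qed

lemma sq_tgt_verts: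
  assumes "\<forall>\<alpha>\<in>arrs Q. src Q \<alpha> \<in> verts Q \<and> tgt Q \<alpha> \<in> verts Q"
  shows "\<forall>a\<in>arrs (stretch_quiver A Q). tgt (stretch_quiver A Q) a \<in> verts (stretch_quiver A Q)"
  using assms by (auto simp: sq_simps)

lemma sq_src_verts:
  assumes "\<forall>\<alpha>\<in>arrs Q. src Q \<alpha> \<in> verts Q \<and> tgt Q \<alpha> \<in> verts Q"
  shows "\<forall>a\<in>arrs (stretch_quiver A Q). src (stretch_quiver A Q) a \<in> verts (stretch_quiver A Q)"
  using assms by (auto simp: sq_simps)

lemma blk_aux:
  assumes "\<beta> \<in> arrs Q" "1 \<le> j" "j \<le> A"
  shows "composable (stretch_quiver A Q) (src (stretch_quiver A Q) (\<beta>, j)) (map (\<lambda>l. (\<beta>, l)) [j..<A+1])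
    \<and> ptgt (stretch_quiver A Q) (src (stretch_quiver A Q) (\<beta>, j), map (\<lambda>l. (\<beta>, l)) [j..<A+1]) = Inl (tgt Q \<beta>)"
  using assms
proof (induction "A - j" arbitrary: j)
  case 0
  then have "j = A" by simp
  then show ?case by (simp add: sq_simps)
next
  case (Suc n)
  then have jA: "j < A" by simp
  have l: "[j..<A+1] = j # [j+1..<A+1]" using jA by (simp add: upt_rec)
  have IH: "composable (stretch_quiver A Q) (src (stretch_quiver A Q) (\<beta>, j+1)) (map (\<lambda>l. (\<beta>, l)) [j+1..<A+1])
    \<and> ptgt (stretch_quiver A Q) (src (stretch_quiver A Q) (\<beta>, j+1), map (\<lambda>l. (\<beta>, l)) [j+1..<A+1]) = Inl (tgt Q \<beta>)"
    using Suc jA by auto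
  have t: "tgt (stretch_quiver A Q) (\<beta>, j) = src (stretch_quiver A Q) (\<beta>, j+1)"
    using jA Suc.prems by (simp add: sq_simps)
  show ?case unfolding l using IH t by simp
qed

lemma stretch_qpath:
  assumes "A \<ge> 1" "(v, xs) \<in> qpaths Q" and tq: "\<forall>a\<in>arrs Q. tgt Q a \<in> verts Q"
  shows "stretch_path A (v, xs) \<in> qpaths (stretch_quiver A Q)
    \<and> ptgt (stretch_quiver A Q) (stretch_path A (v, xs)) = Inl (ptgt Q (v, xs))"
  using assms(2)
proof (induction xs arbitrary: v)
  case Nil
  then show ?case by (auto simp: stretch_path_def qpaths_iff sq_simps)
next
  case (Cons b bs)
  have b: "b \<in> arrs Q" "src Q b = v" "(tgt Q b, bs) \<in> qpaths Q" "v \<in> verts Q"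
    using Cons.prems tq by (auto simp: qpaths_iff)
  have ba: "composable (stretch_quiver A Q) (Inl v) (blk A b) \<and> ptgt (stretch_quiver A Q) (Inl v, blk A b) = Inl (tgt Q b)"
    using blk_aux[OF b(1), of 1 A] assms(1) b(2) by (simp add: sq_simps)
  have IH: "stretch_path A (tgt Q b, bs) \<in> qpaths (stretch_quiver A Q)
    \<and> ptgt (stretch_quiver A Q) (stretch_path A (tgt Q b, bs)) = Inl (ptgt Q (tgt Q b, bs))"
    using Cons.IH[OF b(3)] .
  have "set (blk A b) \<subseteq> arrs (stretch_quiver A Q)" using b(1) by (auto simp: sq_simps)
  moreover have "Inl v \<in> verts (stretch_quiver A Q)" using b(4) by (simp add: sq_simps)
  ultimately show ?case using IH ba
    by (auto simp: stretch_path_def qpaths_iff composable_append ptgt_append)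
qed

lemma theta_nz:
  assumes "theta A g q \<noteq> 0"
  shows "\<exists>p. g p \<noteq> 0 \<and> stretch_path A p = q"
proof -
  have "{p. g p \<noteq> 0 \<and> stretch_path A p = q} \<noteq> {}"
  proof
    assume "{p. g p \<noteq> 0 \<and> stretch_path A p = q} = {}"
    then have "theta A g q = 0" unfolding theta_def by (simp only: sum.empty)
    with assms show False by simp
  qed
  then show ?thesis by auto
qed

lemma theta_props:
  assumes A: "A \<ge> 1" and tv: "\<forall>\<alpha>\<in>arrs Q. src Q \<alpha> \<in> verts Q \<and> tgt Q \<alpha> \<in> verts Q"
    and g: "g \<in> carrier (path_algebra Q)"
  shows "theta A g \<in> carrier (path_algebra (stretch_quiver A Q))"
    "starts_in (Inl ` verts Q) (theta A g)" "ends_in (stretch_quiver A Q) (Inl ` verts Q) (theta A g)"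
proof -
  have gs: "finite {p. g p \<noteq> 0}" "{p. g p \<noteq> 0} \<subseteq> qpaths Q" using g by (auto simp: pa_simps)
  have tq: "\<forall>a\<in>arrs Q. tgt Q a \<in> verts Q" using tv by auto
  have sub: "{q. theta A g q \<noteq> 0} \<subseteq> stretch_path A ` {p. g p \<noteq> 0}"
  proof
    fix q assume "q \<in> {q. theta A g q \<noteq> 0}"
    then obtain p where "g p \<noteq> 0" "stretch_path A p = q" using theta_nz by blast
    then show "q \<in> stretch_path A ` {p. g p \<noteq> 0}" by blast
  qed
  have P: "q \<in> qpaths (stretch_quiver A Q) \<and> fst q \<in> Inl ` verts Q \<and> ptgt (stretch_quiver A Q) q \<in> Inl ` verts Q"
    if nz: "theta A g q \<noteq> 0" for q
  proof -
    obtain p0 where p0: "g p0 \<noteq> 0" "stretch_path A p0 = q" using theta_nz[OF nz] by blast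
    obtain v xs where "p0 = (v, xs)" by (cases p0)
    then have p: "g (v, xs) \<noteq> 0" "stretch_path A (v, xs) = q" using p0 by auto
    have vq: "(v, xs) \<in> qpaths Q" using p gs by auto
    have "ptgt Q (v, xs) \<in> verts Q" by (rule ptgt_in_verts[OF vq tq])
    then show ?thesis using stretch_qpath[OF A vq tq] p vq by (auto simp: stretch_path_def qpaths_iff)
  qed
  show "theta A g \<in> carrier (path_algebra (stretch_quiver A Q))"
    using sub gs P by (auto simp: pa_simps intro: finite_subset)
  show "starts_in (Inl ` verts Q) (theta A g)" using P by (auto simp: starts_in_def)
  show "ends_in (stretch_quiver A Q) (Inl ` verts Q) (theta A g)" using P by (auto simp: ends_in_def)
qed


lemma Inr_notin_Inl[simp]: "Inr x \<notin> Inl ` S"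
  by auto

lemma chainR_ConsI:
  "u \<notin> E \<Longrightarrow> a \<in> arrs Q \<Longrightarrow> src Q a = u \<Longrightarrow> (\<forall>b\<in>arrs Q. src Q b = u \<longrightarrow> b = a) \<Longrightarrow>
    chainR Q E (tgt Q a) as \<Longrightarrow> chainR Q E u (a # as)"
  unfolding chainR.simps by (intro conjI)

lemma chainL_ConsI:
  "w \<notin> E \<Longrightarrow> a \<in> arrs Q \<Longrightarrow> tgt Q a = w \<Longrightarrow> (\<forall>b\<in>arrs Q. tgt Q b = w \<longrightarrow> b = a) \<Longrightarrow>
    chainL Q E (src Q a) rs \<Longrightarrow> chainL Q E w (a # rs)"
  unfolding chainL.simps by (intro conjI)

lemma chainR_composable: "chainR Q E u as \<Longrightarrow> set as \<subseteq> arrs Q \<and> composable Q u as"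
  by (induction as arbitrary: u) auto

lemma chainR_qpath: "chainR Q E u as \<Longrightarrow> u \<in> verts Q \<Longrightarrow> (u, as) \<in> qpaths Q"
  using chainR_composable[of Q E u as] by (simp add: qpaths_iff)

lemma chainL_composable: "chainL Q E w rs \<Longrightarrow> set rs \<subseteq> arrs Q \<and> composable Q (psrc Q w rs) (rev rs)"
proof (induction rs arbitrary: w)
  case Nil
  then show ?case by simp
next
  case (Cons a rs)
  then have "chainL Q E (src Q a) rs" by simp
  then show ?case using Cons chainL_ptgt[of Q E "src Q a" rs] by (auto simp: composable_append)
qed

lemma chainL_qpath: "chainL Q E w rs \<Longrightarrow> psrc Q w rs \<in> verts Q \<Longrightarrow> (psrc Q w rs, rev rs) \<in> qpaths Q"
  using chainL_composable[of Q E w rs] by (simp add: qpaths_iff)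

definition asR :: "nat \<Rightarrow> 'v + 'a \<times> nat \<Rightarrow> ('a \<times> nat) list" where
  "asR A u = (case u of Inl _ \<Rightarrow> [] | Inr (\<alpha>, j) \<Rightarrow> map (\<lambda>l. (\<alpha>, l)) [j+1..<A+1])"

definition asL :: "'v + 'a \<times> nat \<Rightarrow> ('a \<times> nat) list" where
  "asL u = (case u of Inl _ \<Rightarrow> [] | Inr (\<alpha>, j) \<Rightarrow> map (\<lambda>l. (\<alpha>, l)) (rev [1..<j+1]))"

lemma chainR_sq:
  assumes "\<alpha> \<in> arrs Q" "1 \<le> j" "j < A"
  shows "chainR (stretch_quiver A Q) (Inl ` verts Q) (Inr (\<alpha>, j)) (map (\<lambda>l. (\<alpha>, l)) [j+1..<A+1])
    \<and> ptgt (stretch_quiver A Q) (Inr (\<alpha>, j), map (\<lambda>l. (\<alpha>, l)) [j+1..<A+1]) = Inl (tgt Q \<alpha>)"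
  using assms
proof (induction "A - j" arbitrary: j)
  case 0
  then show ?case by simp
next
  case (Suc n)
  have l: "[j+1..<A+1] = (j+1) # [j+2..<A+1]" using Suc.prems by (simp add: upt_rec)
  have u: "\<forall>b\<in>arrs (stretch_quiver A Q). src (stretch_quiver A Q) b = Inr (\<alpha>, j) \<longrightarrow> b = (\<alpha>, j+1)"
    by (auto simp: sq_simps split: if_splits)
  have a: "(\<alpha>, j+1) \<in> arrs (stretch_quiver A Q)" "src (stretch_quiver A Q) (\<alpha>, j+1) = Inr (\<alpha>, j)"
    using Suc.prems by (auto simp: sq_simps)
  show ?case
  proof (cases "j + 1 = A")
    case True
    have t: "tgt (stretch_quiver A Q) (\<alpha>, j+1) = Inl (tgt Q \<alpha>)" using True by (simp add: sq_simps)
    have r: "[j+2..<A+1] = []" using True by simp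
    show ?thesis unfolding l r list.map
      by (intro conjI chainR_ConsI a u Inr_notin_Inl) (simp_all only: t list.map chainR.simps ptgt_Cons ptgt_Nil)
  next
    case False
    then have IH: "chainR (stretch_quiver A Q) (Inl ` verts Q) (Inr (\<alpha>, j+1)) (map (\<lambda>l. (\<alpha>, l)) [j+1+1..<A+1])
      \<and> ptgt (stretch_quiver A Q) (Inr (\<alpha>, j+1), map (\<lambda>l. (\<alpha>, l)) [j+1+1..<A+1]) = Inl (tgt Q \<alpha>)"
      using Suc by simp
    have t: "tgt (stretch_quiver A Q) (\<alpha>, j+1) = Inr (\<alpha>, j+1)" using False by (simp add: sq_simps)
    have r: "j + 2 = j + 1 + 1" by simp
    show ?thesis unfolding l r list.map
      by (intro conjI chainR_ConsI a u Inr_notin_Inl) (simp_all only: t IH ptgt_Cons)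
  qed
qed

lemma chainL_sq:
  assumes "\<alpha> \<in> arrs Q" "1 \<le> j" "j < A"
  shows "chainL (stretch_quiver A Q) (Inl ` verts Q) (Inr (\<alpha>, j)) (map (\<lambda>l. (\<alpha>, l)) (rev [1..<j+1]))
    \<and> psrc (stretch_quiver A Q) (Inr (\<alpha>, j)) (map (\<lambda>l. (\<alpha>, l)) (rev [1..<j+1])) = Inl (src Q \<alpha>)"
  using assms
proof (induction j)
  case 0
  then show ?case by simp
next
  case (Suc i)
  have l: "rev [1..<Suc i+1] = Suc i # rev [1..<i+1]" by simp
  have u: "\<forall>b\<in>arrs (stretch_quiver A Q). tgt (stretch_quiver A Q) b = Inr (\<alpha>, Suc i) \<longrightarrow> b = (\<alpha>, Suc i)"
    by (auto simp: sq_simps split: if_splits)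
  have a: "(\<alpha>, Suc i) \<in> arrs (stretch_quiver A Q)" "tgt (stretch_quiver A Q) (\<alpha>, Suc i) = Inr (\<alpha>, Suc i)"
    using Suc.prems by (auto simp: sq_simps)
  show ?case
  proof (cases "i = 0")
    case True
    have s: "src (stretch_quiver A Q) (\<alpha>, Suc i) = Inl (src Q \<alpha>)" using True by (simp add: sq_simps)
    have r: "rev [1..<i+1] = []" using True by simp
    show ?thesis unfolding l r list.map
      by (intro conjI chainL_ConsI a u Inr_notin_Inl) (simp_all only: s list.map chainL.simps psrc.simps)
  next
    case False
    then have IH: "chainL (stretch_quiver A Q) (Inl ` verts Q) (Inr (\<alpha>, i)) (map (\<lambda>l. (\<alpha>, l)) (rev [1..<i+1]))
      \<and> psrc (stretch_quiver A Q) (Inr (\<alpha>, i)) (map (\<lambda>l. (\<alpha>, l)) (rev [1..<i+1])) = Inl (src Q \<alpha>)"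
      using Suc by simp
    have s: "src (stretch_quiver A Q) (\<alpha>, Suc i) = Inr (\<alpha>, i)" using False by (simp add: sq_simps)
    show ?thesis unfolding l list.map
      by (intro conjI chainL_ConsI a u Inr_notin_Inl) (simp_all only: s IH psrc.simps)
  qed
qed

lemma asR_props:
  assumes u: "u \<in> verts (stretch_quiver A Q)"
    and tv: "\<forall>\<alpha>\<in>arrs Q. src Q \<alpha> \<in> verts Q \<and> tgt Q \<alpha> \<in> verts Q"
  shows "chainR (stretch_quiver A Q) (Inl ` verts Q) u (asR A u)"
    "ptgt (stretch_quiver A Q) (u, asR A u) \<in> Inl ` verts Q \<or> (u \<in> Inl ` verts Q \<and> asR A u = [])"
proof -
  have "chainR (stretch_quiver A Q) (Inl ` verts Q) u (asR A u) \<and>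
    (ptgt (stretch_quiver A Q) (u, asR A u) \<in> Inl ` verts Q \<or> (u \<in> Inl ` verts Q \<and> asR A u = []))"
  proof (cases u)
    case (Inl v)
    then show ?thesis using u by (auto simp: asR_def sq_simps)
  next
    case (Inr p)
    then obtain \<alpha> j where p: "u = Inr (\<alpha>, j)" "\<alpha> \<in> arrs Q" "1 \<le> j" "j \<le> A - 1" using u by (auto simp: sq_simps)
    then have "j < A" by auto
    then have C: "chainR (stretch_quiver A Q) (Inl ` verts Q) (Inr (\<alpha>, j)) (map (\<lambda>l. (\<alpha>, l)) [j+1..<A+1])
      \<and> ptgt (stretch_quiver A Q) (Inr (\<alpha>, j), map (\<lambda>l. (\<alpha>, l)) [j+1..<A+1]) = Inl (tgt Q \<alpha>)"
      using chainR_sq[OF p(2,3)] by blast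
    have e: "asR A u = map (\<lambda>l. (\<alpha>, l)) [j+1..<A+1]" by (simp add: asR_def p(1))
    have "tgt Q \<alpha> \<in> verts Q" using tv p(2) by blast
    then show ?thesis using C unfolding p(1) e[unfolded p(1)] by blast
  qed
  then show "chainR (stretch_quiver A Q) (Inl ` verts Q) u (asR A u)"
    "ptgt (stretch_quiver A Q) (u, asR A u) \<in> Inl ` verts Q \<or> (u \<in> Inl ` verts Q \<and> asR A u = [])" by auto
qed

lemma asL_props:
  assumes u: "u \<in> verts (stretch_quiver A Q)"
    and tv: "\<forall>\<alpha>\<in>arrs Q. src Q \<alpha> \<in> verts Q \<and> tgt Q \<alpha> \<in> verts Q"
  shows "chainL (stretch_quiver A Q) (Inl ` verts Q) u (asL u)"
    "psrc (stretch_quiver A Q) u (asL u) \<in> Inl ` verts Q \<or> (u \<in> Inl ` verts Q \<and> asL u = [])"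
proof -
  have "chainL (stretch_quiver A Q) (Inl ` verts Q) u (asL u) \<and>
    (psrc (stretch_quiver A Q) u (asL u) \<in> Inl ` verts Q \<or> (u \<in> Inl ` verts Q \<and> asL u = []))"
  proof (cases u)
    case (Inl v)
    then show ?thesis using u by (auto simp: asL_def sq_simps)
  next
    case (Inr p)
    then obtain \<alpha> j where p: "u = Inr (\<alpha>, j)" "\<alpha> \<in> arrs Q" "1 \<le> j" "j \<le> A - 1" using u by (auto simp: sq_simps)
    then have "j < A" by auto
    then have C: "chainL (stretch_quiver A Q) (Inl ` verts Q) (Inr (\<alpha>, j)) (map (\<lambda>l. (\<alpha>, l)) (rev [1..<j+1]))
      \<and> psrc (stretch_quiver A Q) (Inr (\<alpha>, j)) (map (\<lambda>l. (\<alpha>, l)) (rev [1..<j+1])) = Inl (src Q \<alpha>)"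
      using chainL_sq[OF p(2,3)] by blast
    have e: "asL u = map (\<lambda>l. (\<alpha>, l)) (rev [1..<j+1])" by (simp add: asL_def p(1))
    have "src Q \<alpha> \<in> verts Q" using tv p(2) by blast
    then show ?thesis using C unfolding p(1) e[unfolded p(1)] by blast
  qed
  then show "chainL (stretch_quiver A Q) (Inl ` verts Q) u (asL u)"
    "psrc (stretch_quiver A Q) u (asL u) \<in> Inl ` verts Q \<or> (u \<in> Inl ` verts Q \<and> asL u = [])" by auto
qed



lemma quot_carrier_ex:
  "X \<in> carrier (R Quot K) \<Longrightarrow> \<exists>x\<in>carrier R. X = K +>\<^bsub>R\<^esub> x"
  by (auto simp: FactRing_def A_RCOSETS_def')

lemma pa_finsum_apply:
  assumes R: "ring (path_algebra Q :: (('v, 'a) qpath \<Rightarrow> 'k::field) ring)"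
    and fin: "finite S" and F: "F \<in> S \<rightarrow> carrier (path_algebra Q :: (('v, 'a) qpath \<Rightarrow> 'k::field) ring)"
  shows "finsum (path_algebra Q) F S p = (\<Sum>s\<in>S. F s p)"
  using fin F
proof (induction S rule: finite_induct)
  case empty
  interpret ring "path_algebra Q :: (('v, 'a) qpath \<Rightarrow> 'k::field) ring" by fact
  show ?case by (simp add: pa_simps)
next
  case (insert s S)
  interpret ring "path_algebra Q :: (('v, 'a) qpath \<Rightarrow> 'k::field) ring" by fact
  have "F \<in> S \<rightarrow> carrier (path_algebra Q)" "F s \<in> carrier (path_algebra Q)" using insert by auto
  then show ?case using insert by (simp add: finsum_insert pa_add_apply)
qed

lemma pel_carrier: "p \<in> qpaths Q \<Longrightarrow> pel p \<in> carrier (path_algebra Q)"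
  by (auto simp: pa_simps pel_def)

lemma vset_mult_starts: "starts_in E f \<Longrightarrow> vset E \<otimes>\<^bsub>path_algebra Q\<^esub> f = f"
  by (rule ext) (auto simp: vset_mult starts_in_def)

lemma mult_vset_ends: "ends_in Q E f \<Longrightarrow> f \<otimes>\<^bsub>path_algebra Q\<^esub> vset E = f"
  by (rule ext) (auto simp: mult_vset ends_in_def)

lemma ends_vset_mult: "ends_in Q E f \<Longrightarrow> ends_in Q E (vset E' \<otimes>\<^bsub>path_algebra Q\<^esub> f)"
  by (auto simp: ends_in_def vset_mult split: if_splits)

lemma starts_mult_vset: "starts_in E f \<Longrightarrow> starts_in E (f \<otimes>\<^bsub>path_algebra Q\<^esub> vset E')"
  by (auto simp: starts_in_def mult_vset split: if_splits)

lemma ends_mult_vset: "ends_in Q E (f \<otimes>\<^bsub>path_algebra Q\<^esub> vset E)"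
  by (auto simp: ends_in_def mult_vset split: if_splits)

lemma starts_vset_mult: "starts_in E (vset E \<otimes>\<^bsub>path_algebra Q\<^esub> f)"
  by (auto simp: starts_in_def vset_mult split: if_splits)

lemma vset_idem: "vset E \<otimes>\<^bsub>path_algebra Q\<^esub> vset E = vset E"
proof
  fix p show "(vset E \<otimes>\<^bsub>path_algebra Q\<^esub> vset E) p = vset E p"
    unfolding vset_mult by (simp add: vset_def)
qed

locale stretch_setup =
  fixes Q :: "('v, 'a) quiver" and A :: nat and G :: "(('v, 'a) qpath \<Rightarrow> 'k::field) set"
  assumes finV: "finite (verts Q)" and finA: "finite (arrs Q)"
    and tv: "\<forall>\<alpha>\<in>arrs Q. src Q \<alpha> \<in> verts Q \<and> tgt Q \<alpha> \<in> verts Q"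
    and Gc: "G \<subseteq> carrier (path_algebra Q)" and A1: "A \<ge> 1"
begin

abbreviation "Qt \<equiv> stretch_quiver A Q"
abbreviation "R \<equiv> (path_algebra Qt :: (('v + 'a \<times> nat, 'a \<times> nat) qpath \<Rightarrow> 'k) ring)"
abbreviation "E \<equiv> Inl ` verts Q"
abbreviation "Gs \<equiv> theta A ` G"
abbreviation "K \<equiv> genideal R Gs"
abbreviation "L \<equiv> R Quot K"
abbreviation "pi \<equiv> (\<lambda>x. K +>\<^bsub>R\<^esub> x)"
abbreviation "e \<equiv> finsum R (\<lambda>v. vtx (Inl v)) (verts Q)"

lemma tgtQt: "\<forall>a\<in>arrs Qt. tgt Qt a \<in> verts Qt" by (rule sq_tgt_verts[OF tv])

lemma finQt: "finite (verts Qt)" by (rule sq_finite[OF finV finA])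

lemma Rring: "ring R" by (rule pa_ring[OF finQt tgtQt])

sublocale Rr: ring R by (rule Rring)

lemma Gs_carrier: "Gs \<subseteq> carrier R"
  using theta_props(1)[OF A1 tv] Gc by auto

lemma Gs_starts: "\<forall>g\<in>Gs. starts_in E g"
  using theta_props(2)[OF A1 tv] Gc by auto

lemma Gs_ends: "\<forall>g\<in>Gs. ends_in Qt E g"
  using theta_props(3)[OF A1 tv] Gc by auto

lemma Kideal: "ideal K R" by (rule Rr.genideal_ideal[OF Gs_carrier])

sublocale Ki: ideal K R by (rule Kideal)

lemma Lring: "ring L" by (rule Ki.quotient_is_ring)

sublocale Lr: ring L by (rule Lring)

lemma pi_hom: "pi \<in> ring_hom R L" by (rule Ki.rcos_ring_hom)

lemma pi_closed: "x \<in> carrier R \<Longrightarrow> pi x \<in> carrier L"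
  by (rule ring_hom_closed[OF pi_hom])

lemma pi_mult: "x \<in> carrier R \<Longrightarrow> y \<in> carrier R \<Longrightarrow> pi (x \<otimes>\<^bsub>R\<^esub> y) = pi x \<otimes>\<^bsub>L\<^esub> pi y"
  by (rule ring_hom_mult[OF pi_hom])

lemma pi_add: "x \<in> carrier R \<Longrightarrow> y \<in> carrier R \<Longrightarrow> pi (x \<oplus>\<^bsub>R\<^esub> y) = pi x \<oplus>\<^bsub>L\<^esub> pi y"
  by (rule ring_hom_add[OF pi_hom])

lemma pi_eq: "x \<in> carrier R \<Longrightarrow> y \<in> carrier R \<Longrightarrow> x \<ominus>\<^bsub>R\<^esub> y \<in> K \<Longrightarrow> pi x = pi y"
  using Rr.quotient_eq_iff_same_a_r_cos[OF Kideal] by blast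

lemma pi_eqD: "x \<in> carrier R \<Longrightarrow> y \<in> carrier R \<Longrightarrow> pi x = pi y \<Longrightarrow> x \<ominus>\<^bsub>R\<^esub> y \<in> K"
  using Rr.quotient_eq_iff_same_a_r_cos[OF Kideal] by blast

lemma L_ex: "X \<in> carrier L \<Longrightarrow> \<exists>x\<in>carrier R. X = pi x"
  by (rule quot_carrier_ex)

lemma vtx_carrier: "u \<in> verts Qt \<Longrightarrow> vtx u \<in> carrier R"
  unfolding vtx_def by (rule pel_carrier) (simp add: qpaths_iff)

lemma Inl_verts: "v \<in> verts Q \<Longrightarrow> Inl v \<in> verts Qt"
  by (simp add: sq_simps)

lemma E_sub: "E \<subseteq> verts Qt"
  by (auto simp: sq_simps)

lemma e_vset: "e = vset E"
proof
  fix p :: "('v + 'a \<times> nat, 'a \<times> nat) qpath"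
  have "e p = (\<Sum>v\<in>verts Q. vtx (Inl v) p)"
    by (rule pa_finsum_apply[OF Rring finV]) (auto intro: vtx_carrier Inl_verts)
  also have "\<dots> = vset E p"
  proof (cases "snd p = [] \<and> fst p \<in> E")
    case True
    then obtain v0 where v0: "v0 \<in> verts Q" "fst p = Inl v0" by auto
    have "(\<Sum>v\<in>verts Q. vtx (Inl v) p) = vtx (Inl v0) p"
      by (rule sum_single[OF finV v0(1)]) (use v0 in \<open>auto simp: vtx_vset vset_def\<close>)
    then show ?thesis using True v0 by (simp add: vtx_vset vset_def)
  next
    case False
    then have "vtx (Inl v) p = (0::'k)" if "v \<in> verts Q" for v
      using that by (auto simp: vtx_vset vset_def)
    then show ?thesis using False by (simp add: vset_def)
  qed
  finally show "e p = vset E p" .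
qed

lemma e_carrier: "e \<in> carrier R"
  by (rule Rr.finsum_closed) (auto intro: vtx_carrier Inl_verts)

lemma eps_carrier: "pi e \<in> carrier L" by (rule pi_closed[OF e_carrier])

lemma ee: "e \<otimes>\<^bsub>R\<^esub> e = e"
  unfolding e_vset by (rule vset_idem)

lemma eps_idem: "pi e \<otimes>\<^bsub>L\<^esub> pi e = pi e"
proof -
  have "pi e \<otimes>\<^bsub>L\<^esub> pi e = pi (e \<otimes>\<^bsub>R\<^esub> e)" by (rule pi_mult[OF e_carrier e_carrier, symmetric])
  also have "\<dots> = pi e" by (simp only: ee)
  finally show ?thesis .
qed

lemma sum_vtx_one: "finsum R vtx (verts Qt) = \<one>\<^bsub>R\<^esub>"
proof
  fix p :: "('v + 'a \<times> nat, 'a \<times> nat) qpath"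
  have "finsum R vtx (verts Qt) p = (\<Sum>u\<in>verts Qt. vtx u p)"
    by (rule pa_finsum_apply[OF Rring finQt]) (auto intro: vtx_carrier)
  also have "\<dots> = \<one>\<^bsub>R\<^esub> p"
  proof (cases "snd p = [] \<and> fst p \<in> verts Qt")
    case True
    have "(\<Sum>u\<in>verts Qt. vtx u p) = vtx (fst p) p"
      by (rule sum_single[OF finQt]) (use True in \<open>auto simp: vtx_vset vset_def\<close>)
    then show ?thesis using True by (simp add: vtx_vset vset_def pa_one_vset)
  next
    case False
    then have "vtx u p = (0::'k)" if "u \<in> verts Qt" for u
      using that by (auto simp: vtx_vset vset_def)
    then show ?thesis using False by (simp add: vset_def pa_one_vset)
  qed
  finally show "finsum R vtx (verts Qt) p = \<one>\<^bsub>R\<^esub> p" .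
qed

lemma vtx_idem: "vtx u \<otimes>\<^bsub>R\<^esub> vtx u = vtx u"
  unfolding vtx_vset by (rule vset_idem)

end

context stretch_setup
begin

definition "Fr u y = Lstrip Qt u (asR A u) (vtx u \<otimes>\<^bsub>R\<^esub> y)"

lemma pa_neg_eq: "x \<in> carrier R \<Longrightarrow> \<ominus>\<^bsub>R\<^esub> x = (\<lambda>p. - x p)"
  by (rule pa_inv[OF Rring])

lemma Fr_carrier: "u \<in> verts Qt \<Longrightarrow> y \<in> carrier R \<Longrightarrow> Fr u y \<in> carrier R"
  unfolding Fr_def by (intro Lstrip_closed[OF tgtQt] Rr.m_closed vtx_carrier)

lemma Fr_add: "u \<in> verts Qt \<Longrightarrow> x \<in> carrier R \<Longrightarrow> y \<in> carrier R \<Longrightarrow> Fr u (x \<oplus>\<^bsub>R\<^esub> y) = Fr u x \<oplus>\<^bsub>R\<^esub> Fr u y"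
  unfolding Fr_def by (simp add: Rr.r_distr vtx_carrier Lstrip_add)

lemma Fr_minus: assumes u: "u \<in> verts Qt" and x: "x \<in> carrier R" and y: "y \<in> carrier R"
  shows "Fr u (x \<ominus>\<^bsub>R\<^esub> y) = Fr u x \<ominus>\<^bsub>R\<^esub> Fr u y"
proof -
  have v: "vtx u \<in> carrier R" by (rule vtx_carrier[OF u])
  have vy: "vtx u \<otimes>\<^bsub>R\<^esub> y \<in> carrier R" using v y by simp
  have "Fr u (x \<ominus>\<^bsub>R\<^esub> y) = Lstrip Qt u (asR A u) (vtx u \<otimes>\<^bsub>R\<^esub> x) \<oplus>\<^bsub>R\<^esub> Lstrip Qt u (asR A u) (\<ominus>\<^bsub>R\<^esub> (vtx u \<otimes>\<^bsub>R\<^esub> y))"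
    unfolding Fr_def a_minus_def using v x y by (simp add: Rr.r_distr Rr.r_minus Lstrip_add)
  also have "Lstrip Qt u (asR A u) (\<ominus>\<^bsub>R\<^esub> (vtx u \<otimes>\<^bsub>R\<^esub> y)) = (\<lambda>p. - Fr u y p)"
    unfolding pa_neg_eq[OF vy] Fr_def by (rule Lstrip_neg)
  also have "(\<lambda>p. - Fr u y p) = \<ominus>\<^bsub>R\<^esub> Fr u y" by (rule pa_neg_eq[OF Fr_carrier[OF u y], symmetric])
  finally show ?thesis by (simp add: a_minus_def Fr_def)
qed

lemma Fr_K: "u \<in> verts Qt \<Longrightarrow> y \<in> K \<Longrightarrow> Fr u y \<in> K"
  unfolding Fr_def
  by (intro Lstrip_ideal[OF Rring tgtQt Gs_carrier Gs_starts] asR_props(1)[OF _ tv] Ki.I_l_closed vtx_carrier)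

lemma Fr_ends_starts:
  assumes u: "u \<in> verts Qt" and y: "ends_in Qt E y"
  shows "ends_in Qt E (Fr u y)" "starts_in E (Fr u y)"
proof -
  have z: "ends_in Qt E (vtx u \<otimes>\<^bsub>R\<^esub> y)" unfolding vtx_vset by (rule ends_vset_mult[OF y])
  show "ends_in Qt E (Fr u y)" unfolding Fr_def by (rule Lstrip_ends[OF z])
  show "starts_in E (Fr u y)"
  proof (cases "asR A u")
    case Nil
    then have "u \<in> E" using asR_props(2)[OF u tv] by auto
    moreover have "starts_in {u} (vtx u \<otimes>\<^bsub>R\<^esub> y)" unfolding vtx_vset by (rule starts_vset_mult)
    ultimately show ?thesis unfolding Fr_def using Nil by (auto simp: starts_in_def)
  next
    case (Cons a as)
    then have "ptgt Qt (u, a # as) \<in> E" using asR_props(2)[OF u tv] by auto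
    then show ?thesis unfolding Fr_def using Cons Lstrip_starts[of Qt u a as] by (auto simp: starts_in_def)
  qed
qed

lemma Fr_ident:
  assumes u: "u \<in> verts Qt" and y: "y \<in> carrier R" and ye: "ends_in Qt E y"
  shows "vtx u \<otimes>\<^bsub>R\<^esub> y = pel (u, asR A u) \<otimes>\<^bsub>R\<^esub> Fr u y"
proof -
  have z: "ends_in Qt E (vtx u \<otimes>\<^bsub>R\<^esub> y)" unfolding vtx_vset by (rule ends_vset_mult[OF ye])
  have "vtx u \<otimes>\<^bsub>R\<^esub> (vtx u \<otimes>\<^bsub>R\<^esub> y) = pel (u, asR A u) \<otimes>\<^bsub>R\<^esub> Fr u y"
    unfolding Fr_def
    by (rule Lstrip_ident[OF tgtQt asR_props(1)[OF u tv] Rr.m_closed[OF vtx_carrier[OF u] y] z])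
  then show ?thesis by (simp add: pa_mult_assoc[symmetric] vtx_idem)
qed

lemma Fr_mult:
  assumes u: "u \<in> verts Qt" and ye: "ends_in Qt E y"
  shows "Fr u (y \<otimes>\<^bsub>R\<^esub> t) = Fr u y \<otimes>\<^bsub>R\<^esub> t"
proof -
  have z: "ends_in Qt E (vtx u \<otimes>\<^bsub>R\<^esub> y)" unfolding vtx_vset by (rule ends_vset_mult[OF ye])
  show ?thesis unfolding Fr_def pa_mult_assoc[symmetric]
    by (rule Lstrip_mult[OF asR_props(1)[OF u tv] z])
qed

lemma pelR_carrier: "u \<in> verts Qt \<Longrightarrow> pel (u, asR A u) \<in> carrier R"
  by (intro pel_carrier chainR_qpath[OF asR_props(1)[OF _ tv]])

lemma pelR_ends: assumes u: "u \<in> verts Qt" shows "ends_in Qt E (pel (u, asR A u) :: _ \<Rightarrow> 'k)"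
proof -
  have "ptgt Qt (u, asR A u) \<in> E" using asR_props(2)[OF u tv] by auto
  then show ?thesis by (auto simp: ends_in_def pel_def split: if_splits)
qed

abbreviation "PR \<equiv> right_corner_module L (pi e)"
abbreviation "BB \<equiv> corner_ring L (pi e)"

lemma PR_iff: "Y \<in> carrier PR \<longleftrightarrow> Y \<in> carrier L \<and> Y \<otimes>\<^bsub>L\<^esub> pi e = Y"
  by (rule Lr.rcm_carrier_iff[OF eps_carrier eps_idem])

lemma BB_iff: "b \<in> carrier BB \<longleftrightarrow> b \<in> carrier L \<and> pi e \<otimes>\<^bsub>L\<^esub> b = b \<and> b \<otimes>\<^bsub>L\<^esub> pi e = b"
  by (rule Lr.corner_carrier_iff[OF eps_carrier eps_idem])

lemma PR_rep: assumes "Y \<in> carrier PR" shows "\<exists>y. y \<in> carrier R \<and> ends_in Qt E y \<and> Y = pi y"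
proof -
  have Y: "Y \<in> carrier L" "Y \<otimes>\<^bsub>L\<^esub> pi e = Y" using assms PR_iff by auto
  obtain y0 where y0: "y0 \<in> carrier R" "Y = pi y0" using L_ex[OF Y(1)] by blast
  have "Y = pi (y0 \<otimes>\<^bsub>R\<^esub> e)" using Y(2) y0 pi_mult[OF y0(1) e_carrier] by simp
  moreover have "ends_in Qt E (y0 \<otimes>\<^bsub>R\<^esub> e)" unfolding e_vset by (rule ends_mult_vset)
  moreover have "y0 \<otimes>\<^bsub>R\<^esub> e \<in> carrier R" using y0 e_carrier by simp
  ultimately show ?thesis by blast
qed

definition "repR Y = (SOME y. y \<in> carrier R \<and> ends_in Qt E y \<and> Y = pi y)"

lemma repR: "Y \<in> carrier PR \<Longrightarrow> repR Y \<in> carrier R \<and> ends_in Qt E (repR Y) \<and> Y = pi (repR Y)"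
  unfolding repR_def using PR_rep by (rule someI_ex)

definition "phiR u Y = pi (Fr u (repR Y))"

lemma phiR_eq:
  assumes u: "u \<in> verts Qt" and Y: "Y \<in> carrier PR" and y: "y \<in> carrier R" "Y = pi y"
  shows "phiR u Y = pi (Fr u y)"
proof -
  note r = repR[OF Y]
  have "repR Y \<ominus>\<^bsub>R\<^esub> y \<in> K" using pi_eqD r y by auto
  then have "Fr u (repR Y \<ominus>\<^bsub>R\<^esub> y) \<in> K" by (rule Fr_K[OF u])
  then have "Fr u (repR Y) \<ominus>\<^bsub>R\<^esub> Fr u y \<in> K" using Fr_minus[OF u] r y by simp
  then show ?thesis unfolding phiR_def using pi_eq Fr_carrier[OF u] r y by blast
qed

end

context stretch_setup
begin

lemma corner_elem:
  assumes f: "f \<in> carrier R" "starts_in E f" "ends_in Qt E f"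
  shows "pi f \<in> carrier BB"
proof -
  have "pi e \<otimes>\<^bsub>L\<^esub> pi f = pi f"
    using pi_mult[OF e_carrier f(1)] vset_mult_starts[OF f(2)] by (simp add: e_vset)
  moreover have "pi f \<otimes>\<^bsub>L\<^esub> pi e = pi f"
    using pi_mult[OF f(1) e_carrier] mult_vset_ends[OF f(3)] by (simp add: e_vset)
  ultimately show ?thesis using BB_iff pi_closed[OF f(1)] by blast
qed

lemma PR_add: "Y \<in> carrier PR \<Longrightarrow> Z \<in> carrier PR \<Longrightarrow> Y \<oplus>\<^bsub>L\<^esub> Z \<in> carrier PR"
  using PR_iff eps_carrier by (simp add: Lr.l_distr)

lemma PR_mult: "Y \<in> carrier PR \<Longrightarrow> b \<in> carrier BB \<Longrightarrow> Y \<otimes>\<^bsub>L\<^esub> b \<in> carrier PR"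
  using PR_iff BB_iff eps_carrier by (simp add: Lr.m_assoc)

theorem right_proj: "right_projective BB PR TYPE('m) TYPE('n)"
proof (rule Lr.right_proj_dual[OF eps_carrier eps_idem finQt, where xb = "\<lambda>u. pi (pel (u, asR A u))" and phi = phiR])
  fix u assume u: "u \<in> verts Qt"
  have "pi (pel (u, asR A u)) \<otimes>\<^bsub>L\<^esub> pi e = pi (pel (u, asR A u))"
    using pi_mult[OF pelR_carrier[OF u] e_carrier] mult_vset_ends[OF pelR_ends[OF u]] by (simp add: e_vset)
  then show "pi (pel (u, asR A u)) \<in> carrier PR" using PR_iff pi_closed[OF pelR_carrier[OF u]] by blast
next
  fix u Y assume u: "u \<in> verts Qt" and Y: "Y \<in> carrier PR"
  note r = repR[OF Y]
  show "phiR u Y \<in> carrier BB" unfolding phiR_def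
    by (rule corner_elem) (use Fr_carrier[OF u] Fr_ends_starts[OF u] r in auto)
next
  fix u Y Z assume u: "u \<in> verts Qt" and Y: "Y \<in> carrier PR" and Z: "Z \<in> carrier PR"
  note ry = repR[OF Y] and rz = repR[OF Z]
  have "Y \<oplus>\<^bsub>L\<^esub> Z = pi (repR Y \<oplus>\<^bsub>R\<^esub> repR Z)" using pi_add ry rz by simp
  then have "phiR u (Y \<oplus>\<^bsub>L\<^esub> Z) = pi (Fr u (repR Y \<oplus>\<^bsub>R\<^esub> repR Z))"
    using phiR_eq[OF u PR_add[OF Y Z]] ry rz by simp
  also have "\<dots> = phiR u Y \<oplus>\<^bsub>L\<^esub> phiR u Z"
    unfolding phiR_def using Fr_add[OF u] Fr_carrier[OF u] pi_add ry rz by simp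
  finally show "phiR u (Y \<oplus>\<^bsub>L\<^esub> Z) = phiR u Y \<oplus>\<^bsub>L\<^esub> phiR u Z" .
next
  fix u Y b assume u: "u \<in> verts Qt" and Y: "Y \<in> carrier PR" and b: "b \<in> carrier BB"
  note ry = repR[OF Y]
  obtain t where t: "t \<in> carrier R" "b = pi t" using L_ex b BB_iff by blast
  have "Y \<otimes>\<^bsub>L\<^esub> b = pi (repR Y \<otimes>\<^bsub>R\<^esub> t)" using pi_mult ry t by simp
  then have "phiR u (Y \<otimes>\<^bsub>L\<^esub> b) = pi (Fr u (repR Y \<otimes>\<^bsub>R\<^esub> t))"
    using phiR_eq[OF u PR_mult[OF Y b]] ry t by simp
  also have "\<dots> = pi (Fr u (repR Y) \<otimes>\<^bsub>R\<^esub> t)" using Fr_mult[OF u] ry by simp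
  also have "\<dots> = phiR u Y \<otimes>\<^bsub>L\<^esub> b"
    unfolding phiR_def using pi_mult Fr_carrier[OF u] ry t by simp
  finally show "phiR u (Y \<otimes>\<^bsub>L\<^esub> b) = phiR u Y \<otimes>\<^bsub>L\<^esub> b" .
next
  fix Y assume Y: "Y \<in> carrier PR"
  note ry = repR[OF Y]
  define y where "y = repR Y"
  have y: "y \<in> carrier R" "ends_in Qt E y" "Y = pi y" using ry by (auto simp: y_def)
  have F: "(\<lambda>u. vtx u \<otimes>\<^bsub>R\<^esub> y) \<in> verts Qt \<rightarrow> carrier R" using y vtx_carrier by auto
  have "(\<Oplus>\<^bsub>L\<^esub>u\<in>verts Qt. pi (pel (u, asR A u)) \<otimes>\<^bsub>L\<^esub> phiR u Y) = (\<Oplus>\<^bsub>L\<^esub>u\<in>verts Qt. pi (vtx u \<otimes>\<^bsub>R\<^esub> y))"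
  proof (rule Lr.finsum_cong')
    fix u assume u: "u \<in> verts Qt"
    show "pi (pel (u, asR A u)) \<otimes>\<^bsub>L\<^esub> phiR u Y = pi (vtx u \<otimes>\<^bsub>R\<^esub> y)"
      unfolding phiR_def y_def[symmetric] Fr_ident[OF u y(1,2)]
      using pi_mult[OF pelR_carrier[OF u] Fr_carrier[OF u y(1)]] by simp
  qed (use F pi_closed in auto)
  also have "\<dots> = pi (\<Oplus>\<^bsub>R\<^esub>u\<in>verts Qt. vtx u \<otimes>\<^bsub>R\<^esub> y)"
    by (rule hom_finsum[OF Rr.is_abelian_group Lr.is_abelian_group _ _ finQt F, symmetric])
       (use pi_closed pi_add in auto)
  also have "(\<Oplus>\<^bsub>R\<^esub>u\<in>verts Qt. vtx u \<otimes>\<^bsub>R\<^esub> y) = y"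
    using Rr.finsum_ldistr[OF finQt y(1), of vtx] vtx_carrier y(1) by (auto simp: sum_vtx_one)
  finally show "Y = (\<Oplus>\<^bsub>L\<^esub>u\<in>verts Qt. pi (pel (u, asR A u)) \<otimes>\<^bsub>L\<^esub> phiR u Y)" using y by simp
qed

end

context stretch_setup
begin

definition "Fl u y = Rstrip Qt (asL u) (y \<otimes>\<^bsub>R\<^esub> vtx u)"

lemma Fl_carrier: "u \<in> verts Qt \<Longrightarrow> y \<in> carrier R \<Longrightarrow> Fl u y \<in> carrier R"
  unfolding Fl_def by (intro Rstrip_closed[OF tgtQt] Rr.m_closed vtx_carrier)

lemma Fl_add: "u \<in> verts Qt \<Longrightarrow> x \<in> carrier R \<Longrightarrow> y \<in> carrier R \<Longrightarrow> Fl u (x \<oplus>\<^bsub>R\<^esub> y) = Fl u x \<oplus>\<^bsub>R\<^esub> Fl u y"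
  unfolding Fl_def by (simp add: Rr.l_distr vtx_carrier Rstrip_add)

lemma Fl_minus: assumes u: "u \<in> verts Qt" and x: "x \<in> carrier R" and y: "y \<in> carrier R"
  shows "Fl u (x \<ominus>\<^bsub>R\<^esub> y) = Fl u x \<ominus>\<^bsub>R\<^esub> Fl u y"
proof -
  have v: "vtx u \<in> carrier R" by (rule vtx_carrier[OF u])
  have vy: "y \<otimes>\<^bsub>R\<^esub> vtx u \<in> carrier R" using v y by simp
  have "Fl u (x \<ominus>\<^bsub>R\<^esub> y) = Rstrip Qt (asL u) (x \<otimes>\<^bsub>R\<^esub> vtx u) \<oplus>\<^bsub>R\<^esub> Rstrip Qt (asL u) (\<ominus>\<^bsub>R\<^esub> (y \<otimes>\<^bsub>R\<^esub> vtx u))"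
    unfolding Fl_def a_minus_def using v x y by (simp add: Rr.l_distr Rr.l_minus Rstrip_add)
  also have "Rstrip Qt (asL u) (\<ominus>\<^bsub>R\<^esub> (y \<otimes>\<^bsub>R\<^esub> vtx u)) = (\<lambda>p. - Fl u y p)"
    unfolding pa_neg_eq[OF vy] Fl_def by (rule Rstrip_neg)
  also have "(\<lambda>p. - Fl u y p) = \<ominus>\<^bsub>R\<^esub> Fl u y" by (rule pa_neg_eq[OF Fl_carrier[OF u y], symmetric])
  finally show ?thesis by (simp add: a_minus_def Fl_def)
qed

lemma Fl_K: assumes u: "u \<in> verts Qt" and y: "y \<in> K" shows "Fl u y \<in> K"
  unfolding Fl_def
  by (rule Rstrip_ideal[OF Rring tgtQt Gs_carrier Gs_starts Gs_ends asL_props(1)[OF u tv]])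
    (intro Ki.I_r_closed vtx_carrier u y)

lemma Fl_ends_starts:
  assumes u: "u \<in> verts Qt" and y: "starts_in E y"
  shows "starts_in E (Fl u y)" "ends_in Qt E (Fl u y)"
proof -
  have z: "starts_in E (y \<otimes>\<^bsub>R\<^esub> vtx u)" unfolding vtx_vset by (rule starts_mult_vset[OF y])
  show "starts_in E (Fl u y)" unfolding Fl_def by (rule Rstrip_starts[OF z])
  show "ends_in Qt E (Fl u y)"
  proof (cases "asL u")
    case Nil
    then have "u \<in> E" using asL_props(2)[OF u tv] by auto
    moreover have "ends_in Qt {u} (y \<otimes>\<^bsub>R\<^esub> vtx u)" unfolding vtx_vset by (rule ends_mult_vset)
    ultimately show ?thesis unfolding Fl_def using Nil by (auto simp: ends_in_def)
  next
    case (Cons a rs)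
    then have "psrc Qt (src Qt a) rs \<in> E" using asL_props(2)[OF u tv] by auto
    then show ?thesis unfolding Fl_def using Cons Rstrip_ends[of Qt a rs "y \<otimes>\<^bsub>R\<^esub> vtx u"] by (auto simp: ends_in_def)
  qed
qed

abbreviation "pL u \<equiv> (psrc Qt u (asL u), rev (asL u))"

lemma Fl_ident:
  assumes u: "u \<in> verts Qt" and y: "y \<in> carrier R" and ys: "starts_in E y"
  shows "y \<otimes>\<^bsub>R\<^esub> vtx u = Fl u y \<otimes>\<^bsub>R\<^esub> pel (pL u)"
proof -
  have z: "starts_in E (y \<otimes>\<^bsub>R\<^esub> vtx u)" unfolding vtx_vset by (rule starts_mult_vset[OF ys])
  have "(y \<otimes>\<^bsub>R\<^esub> vtx u) \<otimes>\<^bsub>R\<^esub> vtx u = Fl u y \<otimes>\<^bsub>R\<^esub> pel (pL u)"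
    unfolding Fl_def
    by (rule Rstrip_ident[OF tgtQt asL_props(1)[OF u tv] Rr.m_closed[OF y vtx_carrier[OF u]] z])
  then show ?thesis by (simp add: pa_mult_assoc vtx_idem)
qed

lemma Fl_mult:
  assumes u: "u \<in> verts Qt" and ys: "starts_in E y"
  shows "Fl u (t \<otimes>\<^bsub>R\<^esub> y) = t \<otimes>\<^bsub>R\<^esub> Fl u y"
proof -
  have z: "starts_in E (y \<otimes>\<^bsub>R\<^esub> vtx u)" unfolding vtx_vset by (rule starts_mult_vset[OF ys])
  show ?thesis unfolding Fl_def pa_mult_assoc
    by (rule Rstrip_mult[OF asL_props(1)[OF u tv] z])
qed

lemma psrc_E: assumes u: "u \<in> verts Qt" shows "psrc Qt u (asL u) \<in> E"
  using asL_props(2)[OF u tv] by auto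

lemma pelL_carrier: "u \<in> verts Qt \<Longrightarrow> pel (pL u) \<in> carrier R"
  by (intro pel_carrier chainL_qpath[OF asL_props(1)[OF _ tv]]) (use psrc_E E_sub in auto)

lemma pelL_starts: assumes u: "u \<in> verts Qt" shows "starts_in E (pel (pL u) :: _ \<Rightarrow> 'k)"
  using psrc_E[OF u] by (auto simp: starts_in_def pel_def split: if_splits)

abbreviation "PL \<equiv> left_corner_module L (pi e)"

lemma PL_iff: "Y \<in> carrier PL \<longleftrightarrow> Y \<in> carrier L \<and> pi e \<otimes>\<^bsub>L\<^esub> Y = Y"
  by (rule Lr.lcm_carrier_iff[OF eps_carrier eps_idem])

lemma PL_rep: assumes "Y \<in> carrier PL" shows "\<exists>y. y \<in> carrier R \<and> starts_in E y \<and> Y = pi y"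
proof -
  have Y: "Y \<in> carrier L" "pi e \<otimes>\<^bsub>L\<^esub> Y = Y" using assms PL_iff by auto
  obtain y0 where y0: "y0 \<in> carrier R" "Y = pi y0" using L_ex[OF Y(1)] by blast
  have "Y = pi (e \<otimes>\<^bsub>R\<^esub> y0)" using Y(2) y0 pi_mult[OF e_carrier y0(1)] by simp
  moreover have "starts_in E (e \<otimes>\<^bsub>R\<^esub> y0)" unfolding e_vset by (rule starts_vset_mult)
  moreover have "e \<otimes>\<^bsub>R\<^esub> y0 \<in> carrier R" using y0 e_carrier by simp
  ultimately show ?thesis by blast
qed

definition "repL Y = (SOME y. y \<in> carrier R \<and> starts_in E y \<and> Y = pi y)"

lemma repL: "Y \<in> carrier PL \<Longrightarrow> repL Y \<in> carrier R \<and> starts_in E (repL Y) \<and> Y = pi (repL Y)"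
  unfolding repL_def using PL_rep by (rule someI_ex)

definition "phiL u Y = pi (Fl u (repL Y))"

lemma phiL_eq:
  assumes u: "u \<in> verts Qt" and Y: "Y \<in> carrier PL" and y: "y \<in> carrier R" "Y = pi y"
  shows "phiL u Y = pi (Fl u y)"
proof -
  note r = repL[OF Y]
  have "repL Y \<ominus>\<^bsub>R\<^esub> y \<in> K" using pi_eqD r y by auto
  then have "Fl u (repL Y \<ominus>\<^bsub>R\<^esub> y) \<in> K" by (rule Fl_K[OF u])
  then have "Fl u (repL Y) \<ominus>\<^bsub>R\<^esub> Fl u y \<in> K" using Fl_minus[OF u] r y by simp
  then show ?thesis unfolding phiL_def using pi_eq Fl_carrier[OF u] r y by blast
qed

lemma PL_add: "Y \<in> carrier PL \<Longrightarrow> Z \<in> carrier PL \<Longrightarrow> Y \<oplus>\<^bsub>L\<^esub> Z \<in> carrier PL"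
  using PL_iff eps_carrier by (simp add: Lr.r_distr)

lemma PL_mult: "Y \<in> carrier PL \<Longrightarrow> b \<in> carrier BB \<Longrightarrow> b \<otimes>\<^bsub>L\<^esub> Y \<in> carrier PL"
  using PL_iff BB_iff eps_carrier by (simp add: Lr.m_assoc[symmetric])

theorem left_proj: "left_projective BB PL TYPE('m) TYPE('n)"
proof (rule Lr.left_proj_dual[OF eps_carrier eps_idem finQt, where xb = "\<lambda>u. pi (pel (pL u))" and phi = phiL])
  fix u assume u: "u \<in> verts Qt"
  have "pi e \<otimes>\<^bsub>L\<^esub> pi (pel (pL u)) = pi (pel (pL u))"
    using pi_mult[OF e_carrier pelL_carrier[OF u]] vset_mult_starts[OF pelL_starts[OF u]] by (simp add: e_vset)
  then show "pi (pel (pL u)) \<in> carrier PL" using PL_iff pi_closed[OF pelL_carrier[OF u]] by blast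
next
  fix u Y assume u: "u \<in> verts Qt" and Y: "Y \<in> carrier PL"
  note r = repL[OF Y]
  show "phiL u Y \<in> carrier BB" unfolding phiL_def
    by (rule corner_elem) (use Fl_carrier[OF u] Fl_ends_starts[OF u] r in auto)
next
  fix u Y Z assume u: "u \<in> verts Qt" and Y: "Y \<in> carrier PL" and Z: "Z \<in> carrier PL"
  note ry = repL[OF Y] and rz = repL[OF Z]
  have "Y \<oplus>\<^bsub>L\<^esub> Z = pi (repL Y \<oplus>\<^bsub>R\<^esub> repL Z)" using pi_add ry rz by simp
  then have "phiL u (Y \<oplus>\<^bsub>L\<^esub> Z) = pi (Fl u (repL Y \<oplus>\<^bsub>R\<^esub> repL Z))"
    using phiL_eq[OF u PL_add[OF Y Z]] ry rz by simp
  also have "\<dots> = phiL u Y \<oplus>\<^bsub>L\<^esub> phiL u Z"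
    unfolding phiL_def using Fl_add[OF u] Fl_carrier[OF u] pi_add ry rz by simp
  finally show "phiL u (Y \<oplus>\<^bsub>L\<^esub> Z) = phiL u Y \<oplus>\<^bsub>L\<^esub> phiL u Z" .
next
  fix u Y b assume u: "u \<in> verts Qt" and Y: "Y \<in> carrier PL" and b: "b \<in> carrier BB"
  note ry = repL[OF Y]
  obtain t where t: "t \<in> carrier R" "b = pi t" using L_ex b BB_iff by blast
  have "b \<otimes>\<^bsub>L\<^esub> Y = pi (t \<otimes>\<^bsub>R\<^esub> repL Y)" using pi_mult ry t by simp
  then have "phiL u (b \<otimes>\<^bsub>L\<^esub> Y) = pi (Fl u (t \<otimes>\<^bsub>R\<^esub> repL Y))"
    using phiL_eq[OF u PL_mult[OF Y b]] ry t by simp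
  also have "\<dots> = pi (t \<otimes>\<^bsub>R\<^esub> Fl u (repL Y))" using Fl_mult[OF u] ry by simp
  also have "\<dots> = b \<otimes>\<^bsub>L\<^esub> phiL u Y"
    unfolding phiL_def using pi_mult Fl_carrier[OF u] ry t by simp
  finally show "phiL u (b \<otimes>\<^bsub>L\<^esub> Y) = b \<otimes>\<^bsub>L\<^esub> phiL u Y" .
next
  fix Y assume Y: "Y \<in> carrier PL"
  note ry = repL[OF Y]
  define y where "y = repL Y"
  have y: "y \<in> carrier R" "starts_in E y" "Y = pi y" using ry by (auto simp: y_def)
  have F: "(\<lambda>u. y \<otimes>\<^bsub>R\<^esub> vtx u) \<in> verts Qt \<rightarrow> carrier R" using y vtx_carrier by auto
  have "(\<Oplus>\<^bsub>L\<^esub>u\<in>verts Qt. phiL u Y \<otimes>\<^bsub>L\<^esub> pi (pel (pL u))) = (\<Oplus>\<^bsub>L\<^esub>u\<in>verts Qt. pi (y \<otimes>\<^bsub>R\<^esub> vtx u))"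
  proof (rule Lr.finsum_cong')
    fix u assume u: "u \<in> verts Qt"
    show "phiL u Y \<otimes>\<^bsub>L\<^esub> pi (pel (pL u)) = pi (y \<otimes>\<^bsub>R\<^esub> vtx u)"
      unfolding phiL_def y_def[symmetric] Fl_ident[OF u y(1,2)]
      using pi_mult[OF Fl_carrier[OF u y(1)] pelL_carrier[OF u]] by simp
  qed (use F pi_closed in auto)
  also have "\<dots> = pi (\<Oplus>\<^bsub>R\<^esub>u\<in>verts Qt. y \<otimes>\<^bsub>R\<^esub> vtx u)"
    by (rule hom_finsum[OF Rr.is_abelian_group Lr.is_abelian_group _ _ finQt F, symmetric])
       (use pi_closed pi_add in auto)
  also have "(\<Oplus>\<^bsub>R\<^esub>u\<in>verts Qt. y \<otimes>\<^bsub>R\<^esub> vtx u) = y"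
    using Rr.finsum_rdistr[OF finQt y(1), of vtx] vtx_carrier y(1) by (auto simp: sum_vtx_one)
  finally show "Y = (\<Oplus>\<^bsub>L\<^esub>u\<in>verts Qt. phiL u Y \<otimes>\<^bsub>L\<^esub> pi (pel (pL u)))" using y by simp
qed

end


theorem theorem1p13:
  fixes Q :: "('v, 'a) quiver"
    and I G :: "(('v, 'a) qpath \<Rightarrow> 'k::field) set"
    and A :: nat
  assumes "finite (verts Q)" and "finite (arrs Q)"
    and "\<forall>\<alpha>\<in>arrs Q. src Q \<alpha> \<in> verts Q \<and> tgt Q \<alpha> \<in> verts Q"
    and "admissible Q I"
    and "minimal_generating_set Q G I"
    and "\<forall>g\<in>G. uniform Q g"
    and "A \<ge> 1"
  shows "right_projective
           (corner_ring (stretched_algebra A Q G) (stretched_eps A Q G))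
           (right_corner_module (stretched_algebra A Q G) (stretched_eps A Q G))
           TYPE('m) TYPE('n)
       \<and> left_projective
           (corner_ring (stretched_algebra A Q G) (stretched_eps A Q G))
           (left_corner_module (stretched_algebra A Q G) (stretched_eps A Q G))
           TYPE('m) TYPE('n)"
proof -
  have G: "G \<subseteq> carrier (path_algebra Q)" using assms(5) by (simp add: minimal_generating_set_def)
  interpret S: stretch_setup Q A G
    by unfold_locales (use assms G in auto)
  show ?thesis
    unfolding stretched_algebra_def stretched_eps_def stretched_ideal_def
    using S.right_proj S.left_proj by blast
qed

end
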